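(* Let $q$ be a prime power, $2\le n\le m$, let $C\subseteq\mathbb{F}_{q^m}^n$ be a vector rank-metric code, and let $\Gamma$ be a basis of $\mathbb{F}_{q^m}$ over $\mathbb{F}_q$ with dual basis $\Gamma^*$. Then $P(\Gamma(C^{\perp\!\!\perp}),\mathrm c)=P(\Gamma^*(C),\mathrm c)^*=P(\Gamma(C),\mathrm c)^*$ and $P(\Gamma(C^{\perp\!\!\perp}),\mathrm r)=P(\Gamma^*(C),\mathrm r)^*\sim P(\Gamma(C),\mathrm r)^*$.
   Context: A vector rank-metric code is an $\mathbb{F}_{q^m}$-linear subspace $C\subseteq\mathbb{F}_{q^m}^n$; its dual is $C^{\perp\!\!\perp}=\{v\in\mathbb{F}_{q^m}^n\mid\langle v,w\rangle=0\ \forall w\in C\}$ for the standard inner product of $\mathbb{F}_{q^m}^n$. For an $\mathbb{F}_q$-basis $\Gamma=\{\gamma_1,\dots,\gamma_m\}$ of $\mathbb{F}_{q^m}$, the dual basis $\Gamma^*=\{\gamma_1^*,\dots,\gamma_m^*\}$ is the one with $\mathrm{Tr}_{\mathbb{F}_{q^m}/\mathbb{F}_q}(\gamma_i\gamma_j^* )=\delta_{ij}$. For $v\in\mathbb{F}_{q^m}^n$, $\Gamma(v)$ is the unique $n\times m$ matrix over $\mathbb{F}_q$ with $v_i=\sum_j\Gamma(v)_{ij}\gamma_j$, and $\Gamma(C)=\{\Gamma(v)\mid v\in C\}$. For an $\mathbb{F}_q$-subspace $\mathcal{C}$ of $n\times m$ matrices and subspaces $J\subseteq\mathbb{F}_q^n$,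 $K\subseteq\mathbb{F}_q^m$: $\mathcal{C}(J,\mathrm c)=\{M\in\mathcal{C}\mid\mathrm{colsp}(M)\subseteq J\}$, $\mathcal{C}(K,\mathrm r)=\{M\in\mathcal{C}\mid\mathrm{rowsp}(M)\subseteq K\}$, $\rho_{\mathrm c}(\mathcal{C},J)=(\dim\mathcal{C}-\dim\mathcal{C}(J^\perp,\mathrm c))/m$, $\rho_{\mathrm r}(\mathcal{C},K)=(\dim\mathcal{C}-\dim\mathcal{C}(K^\perp,\mathrm r))/n$ ($\perp$ for the standard inner product); $P(\mathcal{C},\mathrm c)=(\mathbb{F}_q^n,\rho_{\mathrm c}(\mathcal{C},\cdot))$, $P(\mathcal{C},\mathrm r)=(\mathbb{F}_q^m,\rho_{\mathrm r}(\mathcal{C},\cdot))$. The dual of a $q$-polymatroid $P=(\mathbb{F}_q^N,\rho)$ is $P^*=(\mathbb{F}_q^N,\rho^* )$ with $\rho^*(A)=\dim(A)-\rho(\mathbb{F}_q^N)+\rho(A^\perp)$. Two pairs $(\mathbb{F}_q^N,\rho_1)$, $(\mathbb{F}_q^N,\rho_2)$ are equivalent ($\sim$) if there is an $\mathbb{F}_q$-linear isomorphism $\varphi$ of $\mathbb{F}_q^N$ with $\rho_1(A)=\rho_2(\varphi(A))$ for all subspaces $A$. *)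

theory Defs
  imports Complex_Main "HOL-Library.Function_Algebras"
begin

section \<open>Finite fields: F_q as a subfield K of a finite field 'b = F_{q^m}\<close>

definition subfield :: "'b::field set \<Rightarrow> bool" where
  "subfield K \<longleftrightarrow> 0 \<in> K \<and> 1 \<in> K \<and> (\<forall>x\<in>K. \<forall>y\<in>K. x + y \<in> K \<and> x * y \<in> K)
     \<and> (\<forall>x\<in>K. - x \<in> K \<and> inverse x \<in> K)"

definition kspan :: "'s set \<Rightarrow> ('s \<Rightarrow> 'v \<Rightarrow> 'v) \<Rightarrow> 'v::comm_monoid_add set \<Rightarrow> 'v set" where
  "kspan S sc B = {v. \<exists>F c. finite F \<and> F \<subseteq> B \<and> (\<forall>x\<in>F. c x \<in> S) \<and> v = (\<Sum>x\<in>F. sc (c x) x)}"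

definition ksubspace :: "'s set \<Rightarrow> ('s \<Rightarrow> 'v \<Rightarrow> 'v) \<Rightarrow> 'v::comm_monoid_add set \<Rightarrow> bool" where
  "ksubspace S sc V \<longleftrightarrow> 0 \<in> V \<and> (\<forall>x\<in>V. \<forall>y\<in>V. x + y \<in> V) \<and> (\<forall>c\<in>S. \<forall>x\<in>V. sc c x \<in> V)"

definition kdim :: "'s set \<Rightarrow> ('s \<Rightarrow> 'v \<Rightarrow> 'v) \<Rightarrow> 'v::comm_monoid_add set \<Rightarrow> nat" where
  "kdim S sc V = (LEAST d. \<exists>B. finite B \<and> card B = d \<and> B \<subseteq> V \<and> kspan S sc B = V)"

section \<open>Vectors and matrices (indices from 0; entries outside the range are 0)\<close>

text \<open>F^N for a subset K of scalars: vecs K N (with K = UNIV this is F_{q^m}^N).\<close>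
definition vecs :: "'b::field set \<Rightarrow> nat \<Rightarrow> (nat \<Rightarrow> 'b) set" where
  "vecs K N = {v. (\<forall>i<N. v i \<in> K) \<and> (\<forall>i\<ge>N. v i = 0)}"

definition vsc :: "'b::field \<Rightarrow> (nat \<Rightarrow> 'b) \<Rightarrow> (nat \<Rightarrow> 'b)" where
  "vsc c v = (\<lambda>i. c * v i)"

definition msc :: "'b::field \<Rightarrow> (nat \<Rightarrow> nat \<Rightarrow> 'b) \<Rightarrow> (nat \<Rightarrow> nat \<Rightarrow> 'b)" where
  "msc c M = (\<lambda>i j. c * M i j)"

definition dotp :: "nat \<Rightarrow> (nat \<Rightarrow> 'b::field) \<Rightarrow> (nat \<Rightarrow> 'b) \<Rightarrow> 'b" where
  "dotp N u v = (\<Sum>i<N. u i * v i)"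

definition perp :: "'b::field set \<Rightarrow> nat \<Rightarrow> (nat \<Rightarrow> 'b) set \<Rightarrow> (nat \<Rightarrow> 'b) set" where
  "perp K N A = {v \<in> vecs K N. \<forall>u\<in>A. dotp N u v = 0}"

definition rm_code :: "nat \<Rightarrow> (nat \<Rightarrow> 'b::field) set \<Rightarrow> bool" where
  "rm_code n C \<longleftrightarrow> C \<subseteq> vecs UNIV n \<and> ksubspace UNIV vsc C"

definition trace :: "'b::field set \<Rightarrow> nat \<Rightarrow> 'b \<Rightarrow> 'b" where
  "trace K m x = (\<Sum>i<m. x ^ (card K ^ i))"

definition is_basis :: "'b::field set \<Rightarrow> nat \<Rightarrow> (nat \<Rightarrow> 'b) \<Rightarrow> bool" where
  "is_basis K m g \<longleftrightarrow>
     (\<forall>c. (\<forall>j<m. c j \<in> K) \<and> (\<Sum>j<m. c j * g j) = 0 \<longrightarrow> (\<forall>j<m. c j = 0)) \<and>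
     (\<forall>x. \<exists>c. (\<forall>j<m. c j \<in> K) \<and> x = (\<Sum>j<m. c j * g j))"

definition is_dual_basis :: "'b::field set \<Rightarrow> nat \<Rightarrow> (nat \<Rightarrow> 'b) \<Rightarrow> (nat \<Rightarrow> 'b) \<Rightarrow> bool" where
  "is_dual_basis K m g gs \<longleftrightarrow> is_basis K m gs \<and>
     (\<forall>i<m. \<forall>j<m. trace K m (g i * gs j) = (if i = j then 1 else 0))"

definition coord :: "'b::field set \<Rightarrow> nat \<Rightarrow> (nat \<Rightarrow> 'b) \<Rightarrow> 'b \<Rightarrow> nat \<Rightarrow> 'b" where
  "coord K m g x = (THE c. (\<forall>j<m. c j \<in> K) \<and> (\<forall>j\<ge>m. c j = 0) \<and> x = (\<Sum>j<m. c j * g j))"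

text \<open>Gamma(v): the n x m matrix over F_q with v_i = sum_j Gamma(v)_ij gamma_j.\<close>
definition gmat :: "'b::field set \<Rightarrow> nat \<Rightarrow> nat \<Rightarrow> (nat \<Rightarrow> 'b) \<Rightarrow> (nat \<Rightarrow> 'b) \<Rightarrow> (nat \<Rightarrow> nat \<Rightarrow> 'b)" where
  "gmat K n m g v = (\<lambda>i j. if i < n then coord K m g (v i) j else 0)"

definition gimg :: "'b::field set \<Rightarrow> nat \<Rightarrow> nat \<Rightarrow> (nat \<Rightarrow> 'b) \<Rightarrow> (nat \<Rightarrow> 'b) set \<Rightarrow> (nat \<Rightarrow> nat \<Rightarrow> 'b) set" where
  "gimg K n m g C = gmat K n m g ` C"

definition colsp :: "'b::field set \<Rightarrow> nat \<Rightarrow> (nat \<Rightarrow> nat \<Rightarrow> 'b) \<Rightarrow> (nat \<Rightarrow> 'b) set" where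
  "colsp K m M = kspan K vsc {(\<lambda>i. M i j) | j. j < m}"

definition rowsp :: "'b::field set \<Rightarrow> nat \<Rightarrow> (nat \<Rightarrow> nat \<Rightarrow> 'b) \<Rightarrow> (nat \<Rightarrow> 'b) set" where
  "rowsp K n M = kspan K vsc {(\<lambda>j. M i j) | i. i < n}"

definition restr_c :: "'b::field set \<Rightarrow> nat \<Rightarrow> (nat \<Rightarrow> nat \<Rightarrow> 'b) set \<Rightarrow> (nat \<Rightarrow> 'b) set \<Rightarrow> (nat \<Rightarrow> nat \<Rightarrow> 'b) set" where
  "restr_c K m CC J = {M \<in> CC. colsp K m M \<subseteq> J}"

definition restr_r :: "'b::field set \<Rightarrow> nat \<Rightarrow> (nat \<Rightarrow> nat \<Rightarrow> 'b) set \<Rightarrow> (nat \<Rightarrow> 'b) set \<Rightarrow> (nat \<Rightarrow> nat \<Rightarrow> 'b) set" where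
  "restr_r K n CC L = {M \<in> CC. rowsp K n M \<subseteq> L}"

text \<open>rank function of P(CC, c), a q-polymatroid on F_q^n\<close>
definition rho_c :: "'b::field set \<Rightarrow> nat \<Rightarrow> nat \<Rightarrow> (nat \<Rightarrow> nat \<Rightarrow> 'b) set \<Rightarrow> (nat \<Rightarrow> 'b) set \<Rightarrow> real" where
  "rho_c K n m CC J = (real (kdim K msc CC) - real (kdim K msc (restr_c K m CC (perp K n J)))) / real m"

text \<open>rank function of P(CC, r), a q-polymatroid on F_q^m\<close>
definition rho_r :: "'b::field set \<Rightarrow> nat \<Rightarrow> nat \<Rightarrow> (nat \<Rightarrow> nat \<Rightarrow> 'b) set \<Rightarrow> (nat \<Rightarrow> 'b) set \<Rightarrow> real" where
  "rho_r K n m CC L = (real (kdim K msc CC) - real (kdim K msc (restr_r K n CC (perp K m L)))) / real n"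

text \<open>rank function of the dual q-polymatroid of (F_q^N, rho)\<close>
definition pdual :: "'b::field set \<Rightarrow> nat \<Rightarrow> ((nat \<Rightarrow> 'b) set \<Rightarrow> real) \<Rightarrow> (nat \<Rightarrow> 'b) set \<Rightarrow> real" where
  "pdual K N rho A = real (kdim K vsc A) - rho (vecs K N) + rho (perp K N A)"

definition qpm_eq :: "'b::field set \<Rightarrow> nat \<Rightarrow> ((nat \<Rightarrow> 'b) set \<Rightarrow> real) \<Rightarrow> ((nat \<Rightarrow> 'b) set \<Rightarrow> real) \<Rightarrow> bool" where
  "qpm_eq K N rho1 rho2 \<longleftrightarrow>
     (\<forall>A. A \<subseteq> vecs K N \<and> ksubspace K vsc A \<longrightarrow> rho1 A = rho2 A)"

definition qpm_equiv :: "'b::field set \<Rightarrow> nat \<Rightarrow> ((nat \<Rightarrow> 'b) set \<Rightarrow> real) \<Rightarrow> ((nat \<Rightarrow> 'b) set \<Rightarrow> real) \<Rightarrow> bool" where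
  "qpm_equiv K N rho1 rho2 \<longleftrightarrow>
     (\<exists>\<phi>. bij_betw \<phi> (vecs K N) (vecs K N) \<and>
          (\<forall>u\<in>vecs K N. \<forall>v\<in>vecs K N. \<phi> (u + v) = \<phi> u + \<phi> v) \<and>
          (\<forall>c\<in>K. \<forall>u\<in>vecs K N. \<phi> (vsc c u) = vsc c (\<phi> u)) \<and>
          (\<forall>A. A \<subseteq> vecs K N \<and> ksubspace K vsc A \<longrightarrow> rho1 A = rho2 (\<phi> ` A)))"

end

theory Submission
  imports Defs "HOL-Library.FuncSet" "HOL-Number_Theory.Number_Theory"
begin

locale smod =
  fixes S :: "'b::field set" and sc :: "'b \<Rightarrow> 'v::ab_group_add \<Rightarrow> 'v"
  assumes subS: "subfield S" and finS: "finite S"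
    and sc_radd: "sc a (x + y) = sc a x + sc a y"
    and sc_ladd: "sc (a + b) x = sc a x + sc b x"
    and sc_mult: "sc a (sc b x) = sc (a * b) x"
    and sc_one: "sc 1 x = x"
begin

lemma S0: "0 \<in> S" and S1: "1 \<in> S" and Sadd: "x \<in> S \<Longrightarrow> y \<in> S \<Longrightarrow> x + y \<in> S"
  and Smult: "x \<in> S \<Longrightarrow> y \<in> S \<Longrightarrow> x * y \<in> S" and Sneg: "x \<in> S \<Longrightarrow> - x \<in> S"
  and Sinv: "x \<in> S \<Longrightarrow> inverse x \<in> S"
  using subS unfolding subfield_def by auto

lemma sc_zero_l [simp]: "sc 0 x = 0"
  using sc_ladd[of 0 0 x] by simp

lemma sc_zero_r [simp]: "sc a 0 = 0"
  using sc_radd[of a 0 0] by simp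

lemma sc_sum: "sc a (sum f F) = (\<Sum>x\<in>F. sc a (f x))"
  by (induction F rule: infinite_finite_induct) (auto simp: sc_radd)

lemma sc_lsum: "sc (sum f F) x = (\<Sum>i\<in>F. sc (f i) x)"
  by (induction F rule: infinite_finite_induct) (auto simp: sc_ladd)

lemma sc_neg: "sc (- a) x = - sc a x"
  using sc_ladd[of "-a" a x] by (simp add: eq_neg_iff_add_eq_0)

lemma sc_neg_r: "sc a (- x) = - sc a x"
  using sc_radd[of a "-x" x] by (simp add: eq_neg_iff_add_eq_0)

lemma sc_diff: "sc (a - b) x = sc a x - sc b x"
  using sc_ladd[of a "-b" x] by (simp add: sc_neg)

lemma subspace_sum:
  assumes "ksubspace S sc V" "finite F" "\<And>x. x \<in> F \<Longrightarrow> f x \<in> V"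
  shows "sum f F \<in> V"
  using assms(2,3) assms(1) unfolding ksubspace_def
  by (induction F rule: finite_induct) auto

lemma kspan_subspace: "ksubspace S sc (kspan S sc B)"
  unfolding ksubspace_def
proof (intro conjI ballI)
  show "0 \<in> kspan S sc B" unfolding kspan_def
    by (rule CollectI, rule exI[of _ "{}"], auto)
next
  fix x y assume x: "x \<in> kspan S sc B" and y: "y \<in> kspan S sc B"
  from x obtain F c where F: "finite F" "F \<subseteq> B" "\<forall>z\<in>F. c z \<in> S" "x = (\<Sum>z\<in>F. sc (c z) z)"
    unfolding kspan_def by blast
  from y obtain G d where G: "finite G" "G \<subseteq> B" "\<forall>z\<in>G. d z \<in> S" "y = (\<Sum>z\<in>G. sc (d z) z)"
    unfolding kspan_def by blast
  define e where "e z = (if z \<in> F then c z else 0) + (if z \<in> G then d z else 0)" for z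
  have "(\<Sum>z\<in>F \<union> G. sc (if z \<in> F then c z else 0) z) = (\<Sum>z\<in>F. sc (c z) z)"
    using F(1) G(1) by (intro sum.mono_neutral_cong_right) auto
  then have "x = (\<Sum>z\<in>F \<union> G. sc (if z \<in> F then c z else 0) z)" using F(4) by simp
  moreover have "(\<Sum>z\<in>F \<union> G. sc (if z \<in> G then d z else 0) z) = (\<Sum>z\<in>G. sc (d z) z)"
    using F(1) G(1) by (intro sum.mono_neutral_cong_right) auto
  then have "y = (\<Sum>z\<in>F \<union> G. sc (if z \<in> G then d z else 0) z)" using G(4) by simp
  ultimately have "x + y = (\<Sum>z\<in>F \<union> G. sc (e z) z)"
    by (simp add: e_def sc_ladd sum.distrib)
  moreover have "\<forall>z\<in>F \<union> G. e z \<in> S" using F G by (auto simp: e_def intro!: Sadd S0)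
  ultimately show "x + y \<in> kspan S sc B" unfolding kspan_def using F G
    by (intro CollectI exI[of _ "F \<union> G"] exI[of _ e]) auto
next
  fix a x assume a: "a \<in> S" and x: "x \<in> kspan S sc B"
  from x obtain F c where F: "finite F" "F \<subseteq> B" "\<forall>z\<in>F. c z \<in> S" "x = (\<Sum>z\<in>F. sc (c z) z)"
    unfolding kspan_def by blast
  have "sc a x = (\<Sum>z\<in>F. sc (a * c z) z)" using F(4) by (simp add: sc_sum sc_mult)
  then show "sc a x \<in> kspan S sc B" unfolding kspan_def using F a
    by (intro CollectI exI[of _ F] exI[of _ "\<lambda>z. a * c z"]) (auto intro: Smult)
qed

lemma kspan_base: "x \<in> B \<Longrightarrow> x \<in> kspan S sc B"
  unfolding kspan_def
  by (intro CollectI exI[of _ "{x}"] exI[of _ "\<lambda>_. 1"]) (auto simp: sc_one S1)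

lemma kspan_least:
  assumes "ksubspace S sc V" "B \<subseteq> V" shows "kspan S sc B \<subseteq> V"
proof
  fix x assume "x \<in> kspan S sc B"
  then obtain F c where F: "finite F" "F \<subseteq> B" "\<forall>z\<in>F. c z \<in> S" "x = (\<Sum>z\<in>F. sc (c z) z)"
    unfolding kspan_def by blast
  show "x \<in> V" unfolding F(4)
    by (rule subspace_sum[OF assms(1) F(1)]) (use assms F in \<open>auto simp: ksubspace_def\<close>)
qed

lemma kspan_subset_iff:
  assumes "ksubspace S sc V" shows "kspan S sc B \<subseteq> V \<longleftrightarrow> B \<subseteq> V"
  using kspan_least[OF assms] kspan_base by blast

lemma kspan_self: "ksubspace S sc V \<Longrightarrow> kspan S sc V = V"
  using kspan_least[of V V] kspan_base by blast

lemma kspan_as_sum: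
  assumes "x \<in> kspan S sc B" "finite B"
  shows "\<exists>c. (\<forall>z\<in>B. c z \<in> S) \<and> x = (\<Sum>z\<in>B. sc (c z) z)"
proof -
  from assms obtain F c where F: "finite F" "F \<subseteq> B" "\<forall>z\<in>F. c z \<in> S" "x = (\<Sum>z\<in>F. sc (c z) z)"
    unfolding kspan_def by blast
  have "(\<Sum>z\<in>B. sc (if z \<in> F then c z else 0) z) = (\<Sum>z\<in>F. sc (c z) z)"
    using F assms(2) by (intro sum.mono_neutral_cong_right) auto
  then have "x = (\<Sum>z\<in>B. sc (if z \<in> F then c z else 0) z)" using F(4) by simp
  then show ?thesis using F by (intro exI[of _ "\<lambda>z. if z \<in> F then c z else 0"]) (auto intro: S0)
qed

theorem card_kdim:
  assumes V: "ksubspace S sc V" "finite V"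
  shows "card V = card S ^ kdim S sc V"
proof -
  let ?P = "\<lambda>d. \<exists>B. finite B \<and> card B = d \<and> B \<subseteq> V \<and> kspan S sc B = V"
  have ex: "?P (card V)" using V kspan_self by blast
  then have "?P (kdim S sc V)" unfolding kdim_def by (rule LeastI)
  then obtain B where B: "finite B" "card B = kdim S sc V" "B \<subseteq> V" "kspan S sc B = V" by blast
  have minimal: "kdim S sc V \<le> card B'" if "finite B'" "B' \<subseteq> V" "kspan S sc B' = V" for B'
    unfolding kdim_def by (rule Least_le) (use that in blast)
  have indep: "\<forall>z\<in>B. c z = 0" if c: "\<forall>z\<in>B. c z \<in> S" "(\<Sum>z\<in>B. sc (c z) z) = 0" for c
  proof (rule ccontr)
    assume "\<not> (\<forall>z\<in>B. c z = 0)"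
    then obtain z0 where z0: "z0 \<in> B" "c z0 \<noteq> 0" by blast
    have "(\<Sum>z\<in>B. sc (c z) z) = sc (c z0) z0 + (\<Sum>z\<in>B - {z0}. sc (c z) z)"
      using z0 B(1) by (simp add: sum.remove)
    then have eq: "sc (c z0) z0 = - (\<Sum>z\<in>B - {z0}. sc (c z) z)" using c(2)
      by (simp add: eq_neg_iff_add_eq_0)
    have "z0 = sc (inverse (c z0)) (sc (c z0) z0)" using z0 by (simp add: sc_mult sc_one)
    also have "\<dots> = (\<Sum>z\<in>B - {z0}. sc (- (inverse (c z0) * c z)) z)"
      unfolding eq sc_neg_r sc_sum sc_mult sc_neg sum_negf ..
    finally have z0eq: "z0 = \<dots>" .
    have "z0 \<in> kspan S sc (B - {z0})" unfolding kspan_def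
      apply (rule CollectI, rule exI[of _ "B - {z0}"], rule exI[of _ "\<lambda>z. - (inverse (c z0) * c z)"])
      apply (intro conjI)
      using B(1) apply simp
        apply blast
      using c(1) z0 apply (auto intro!: Sneg Smult Sinv)[1]
      by (rule z0eq)
    then have "B \<subseteq> kspan S sc (B - {z0})"
    proof -
      assume z0in: "z0 \<in> kspan S sc (B - {z0})"
      show ?thesis
      proof
        fix x assume "x \<in> B"
        show "x \<in> kspan S sc (B - {z0})"
        proof (cases "x = z0")
          case True then show ?thesis using z0in by simp
        next
          case False then show ?thesis using \<open>x \<in> B\<close> by (intro kspan_base) simp
        qed
      qed
    qed
    then have "kspan S sc B \<subseteq> kspan S sc (B - {z0})"
      by (rule kspan_least[OF kspan_subspace])
    moreover have "kspan S sc (B - {z0}) \<subseteq> V"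
      using B(3) by (intro kspan_least[OF V(1)]) auto
    ultimately have "kspan S sc (B - {z0}) = V" using B(4) by blast
    then have "kdim S sc V \<le> card (B - {z0})" using B by (intro minimal) auto
    then show False using B z0 card_Diff1_less[of B z0] by simp
  qed
  define f where "f c = (\<Sum>z\<in>B. sc (c z) z)" for c
  have "bij_betw f (B \<rightarrow>\<^sub>E S) V"
    unfolding bij_betw_def
  proof
    show "inj_on f (B \<rightarrow>\<^sub>E S)"
    proof (rule inj_onI)
      fix c d assume c: "c \<in> B \<rightarrow>\<^sub>E S" and d: "d \<in> B \<rightarrow>\<^sub>E S" and eq: "f c = f d"
      have "(\<Sum>z\<in>B. sc (c z - d z) z) = f c - f d"
        by (simp add: f_def sc_diff sum_subtractf)
      moreover have "\<forall>z\<in>B. c z - d z \<in> S"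
      proof
        fix z assume "z \<in> B"
        then have "c z \<in> S" "d z \<in> S" using c d by auto
        then show "c z - d z \<in> S" unfolding diff_conv_add_uminus by (intro Sadd Sneg)
      qed
      ultimately have "\<forall>z\<in>B. c z - d z = 0"
        using eq by (intro indep) auto
      then show "c = d" using c d by (intro extensionalityI[of _ B]) (auto simp: PiE_def)
    qed
    show "f ` (B \<rightarrow>\<^sub>E S) = V"
    proof
      show "f ` (B \<rightarrow>\<^sub>E S) \<subseteq> V"
      proof
        fix x assume "x \<in> f ` (B \<rightarrow>\<^sub>E S)"
        then obtain c where c: "c \<in> B \<rightarrow>\<^sub>E S" "x = f c" by blast
        show "x \<in> V" unfolding c f_def
          by (rule subspace_sum[OF V(1) B(1)]) (use V(1) B(3) c(1) in \<open>fastforce simp: ksubspace_def PiE_iff\<close>)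
      qed
    next
      show "V \<subseteq> f ` (B \<rightarrow>\<^sub>E S)"
      proof
        fix x assume "x \<in> V"
        then obtain c where c: "\<forall>z\<in>B. c z \<in> S" "x = (\<Sum>z\<in>B. sc (c z) z)"
          using kspan_as_sum[of x B] B by auto
        then have "x = f (restrict c B)" unfolding f_def by simp
        then show "x \<in> f ` (B \<rightarrow>\<^sub>E S)" using c by auto
      qed
    qed
  qed
  then have "card V = card (B \<rightarrow>\<^sub>E S)" by (simp add: bij_betw_same_card)
  also have "\<dots> = card S ^ card B" using B(1) by (simp add: card_funcsetE)
  finally show ?thesis using B(2) by simp
qed

lemma card_S_ge2: "2 \<le> card S"
proof -
  have "0 \<in> S" "1 \<in> S" by (rule S0, rule S1)
  then have "{0, 1} \<subseteq> S" by auto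
  then have "card {0::'b, 1} \<le> card S" using finS by (rule card_mono[rotated])
  then show ?thesis by simp
qed

lemma kdim_eqI:
  assumes "ksubspace S sc V" "finite V" "card V = card S ^ k"
  shows "kdim S sc V = k"
proof -
  have "card S ^ kdim S sc V = card S ^ k" using card_kdim[OF assms(1,2)] assms(3) by simp
  then show ?thesis using card_S_ge2 by (simp add: power_inject_exp)
qed

end

definition fv :: "'b::field set \<Rightarrow> 'i set \<Rightarrow> ('i \<Rightarrow> 'b) set" where
  "fv K I = {v. (\<forall>i\<in>I. v i \<in> K) \<and> (\<forall>i. i \<notin> I \<longrightarrow> v i = 0)}"

definition fsub :: "'b::field set \<Rightarrow> 'i set \<Rightarrow> ('i \<Rightarrow> 'b) set \<Rightarrow> bool" where
  "fsub K I W \<longleftrightarrow> W \<subseteq> fv K I \<and> 0 \<in> W \<and> (\<forall>x\<in>W. \<forall>y\<in>W. x + y \<in> W)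
     \<and> (\<forall>c\<in>K. \<forall>x\<in>W. (\<lambda>i. c * x i) \<in> W)"

definition fperp :: "'b::field set \<Rightarrow> 'i set \<Rightarrow> ('i \<Rightarrow> 'b) set \<Rightarrow> ('i \<Rightarrow> 'b) set" where
  "fperp K I W = {v \<in> fv K I. \<forall>w\<in>W. (\<Sum>i\<in>I. w i * v i) = 0}"

lemma subfieldD:
  assumes "subfield K"
  shows "0 \<in> K" "1 \<in> K" "x \<in> K \<Longrightarrow> y \<in> K \<Longrightarrow> x + y \<in> K"
    "x \<in> K \<Longrightarrow> y \<in> K \<Longrightarrow> x * y \<in> K" "x \<in> K \<Longrightarrow> - x \<in> K"
    "x \<in> K \<Longrightarrow> inverse x \<in> K" "x \<in> K \<Longrightarrow> y \<in> K \<Longrightarrow> x - y \<in> K"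
proof -
  have H: "0 \<in> K \<and> 1 \<in> K \<and> (\<forall>x\<in>K. \<forall>y\<in>K. x + y \<in> K \<and> x * y \<in> K)
     \<and> (\<forall>x\<in>K. - x \<in> K \<and> inverse x \<in> K)" using assms unfolding subfield_def .
  show "0 \<in> K" "1 \<in> K" using H by (rule conjunct1, rule conjunct1[OF conjunct2])
  show "x \<in> K \<Longrightarrow> y \<in> K \<Longrightarrow> x + y \<in> K" "x \<in> K \<Longrightarrow> y \<in> K \<Longrightarrow> x * y \<in> K"
    "x \<in> K \<Longrightarrow> - x \<in> K" "x \<in> K \<Longrightarrow> inverse x \<in> K"
    using H by simp_all
  show "x \<in> K \<Longrightarrow> y \<in> K \<Longrightarrow> x - y \<in> K"
  proof -
    assume "x \<in> K" "y \<in> K"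
    then have "- y \<in> K" using H by simp
    then have "x + - y \<in> K" using H \<open>x \<in> K\<close> by blast
    then show "x - y \<in> K" by (simp only: diff_conv_add_uminus)
  qed
qed

lemma subfield_sum: "subfield K \<Longrightarrow> (\<And>i. i \<in> F \<Longrightarrow> f i \<in> K) \<Longrightarrow> sum f F \<in> K"
  by (induction F rule: infinite_finite_induct) (auto simp: subfieldD(1,3))

lemma card_fv:
  assumes "finite I"
  shows "card (fv K I) = card K ^ card I"
proof -
  have "bij_betw (\<lambda>v. restrict v I) (fv K I) (I \<rightarrow>\<^sub>E K)"
    by (rule bij_betw_byWitness[where f'="\<lambda>g i. if i \<in> I then g i else 0"])
       (auto simp: fv_def fun_eq_iff)
  then have "card (fv K I) = card (I \<rightarrow>\<^sub>E K)" by (rule bij_betw_same_card)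
  also have "\<dots> = card K ^ card I" using assms by (rule card_funcsetE)
  finally show ?thesis .
qed

lemma finite_fv:
  assumes "finite I" "finite K" shows "finite (fv K I)"
proof -
  have "bij_betw (\<lambda>v. restrict v I) (fv K I) (I \<rightarrow>\<^sub>E K)"
    by (rule bij_betw_byWitness[where f'="\<lambda>g i. if i \<in> I then g i else 0"])
       (auto simp: fv_def fun_eq_iff)
  moreover have "finite (I \<rightarrow>\<^sub>E K)" using assms by (intro finite_PiE) auto
  ultimately show ?thesis using bij_betw_finite by blast
qed

lemma fv_zero [simp]: "subfield K \<Longrightarrow> 0 \<in> fv K I"
  by (auto simp: fv_def subfieldD(1))

lemma fv_add: "subfield K \<Longrightarrow> x \<in> fv K I \<Longrightarrow> y \<in> fv K I \<Longrightarrow> x + y \<in> fv K I"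
  unfolding fv_def by (simp add: subfieldD(3))

lemma fv_scale: "subfield K \<Longrightarrow> c \<in> K \<Longrightarrow> x \<in> fv K I \<Longrightarrow> (\<lambda>i. c * x i) \<in> fv K I"
  unfolding fv_def by (simp add: subfieldD(4))

lemma fsub_fperp:
  assumes K: "subfield K" shows "fsub K I (fperp K I W)"
  unfolding fsub_def
proof (intro conjI ballI)
  show "fperp K I W \<subseteq> fv K I" unfolding fperp_def by blast
  show "0 \<in> fperp K I W" using K by (simp add: fperp_def)
next
  fix x y assume x: "x \<in> fperp K I W" and y: "y \<in> fperp K I W"
  have "(\<Sum>i\<in>I. w i * (x + y) i) = (\<Sum>i\<in>I. w i * x i) + (\<Sum>i\<in>I. w i * y i)" for w
    by (simp add: distrib_left sum.distrib)
  then show "x + y \<in> fperp K I W"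
    using x y fv_add[OF K] unfolding fperp_def by auto
next
  fix c x assume c: "c \<in> K" and x: "x \<in> fperp K I W"
  have "(\<Sum>i\<in>I. w i * (c * x i)) = c * (\<Sum>i\<in>I. w i * x i)" for w
    by (simp add: sum_distrib_left mult_ac)
  then show "(\<lambda>i. c * x i) \<in> fperp K I W"
    using x c fv_scale[OF K c] unfolding fperp_def by auto
qed

lemma fsubD:
  assumes "fsub K I W"
  shows "W \<subseteq> fv K I" "0 \<in> W" "x \<in> W \<Longrightarrow> y \<in> W \<Longrightarrow> x + y \<in> W"
    "c \<in> K \<Longrightarrow> x \<in> W \<Longrightarrow> (\<lambda>i. c * x i) \<in> W"
  using assms unfolding fsub_def by simp_all

lemma fsub_neg: "subfield K \<Longrightarrow> fsub K I W \<Longrightarrow> x \<in> W \<Longrightarrow> - x \<in> W"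
proof -
  assume K: "subfield K" and W: "fsub K I W" and x: "x \<in> W"
  have "- 1 \<in> K" using K by (simp add: subfieldD(2,5))
  then have "(\<lambda>i. (- 1) * x i) \<in> W" using x by (rule fsubD(4)[OF W])
  moreover have "(\<lambda>i. (- 1) * x i) = - x" by (simp add: fun_eq_iff)
  ultimately show ?thesis by simp
qed

lemma fsub_diff: "subfield K \<Longrightarrow> fsub K I W \<Longrightarrow> x \<in> W \<Longrightarrow> y \<in> W \<Longrightarrow> x - y \<in> W"
proof -
  assume K: "subfield K" and W: "fsub K I W" and x: "x \<in> W" and y: "y \<in> W"
  have "- y \<in> W" by (rule fsub_neg[OF K W y])
  then have "x + - y \<in> W" using x by (intro fsubD(3)[OF W])
  then show ?thesis by (simp only: diff_conv_add_uminus)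
qed

lemma fv_insert_restrict:
  assumes "v \<in> fv K (insert a I)" "a \<notin> I" "0 \<in> K"
  shows "v(a := 0) \<in> fv K I"
  using assms unfolding fv_def by auto

lemma sum_insert_upd:
  assumes "finite I" "a \<notin> I"
  shows "(\<Sum>i\<in>insert a I. w i * v i) = w a * v a + (\<Sum>i\<in>I. w i * v i)"
  using assms by simp

lemma sum_upd_notin:
  assumes "a \<notin> I"
  shows "(\<Sum>i\<in>I. w i * (v(a := t)) i) = (\<Sum>i\<in>I. w i * v i)"
  using assms by (intro sum.cong) auto

lemma fsub_reindex: "fsub K J W \<Longrightarrow> W \<subseteq> fv K I \<Longrightarrow> fsub K I W"
  unfolding fsub_def by simp

lemma perp_card:
  assumes K: "subfield K" "finite K" and I: "finite I" and W: "fsub K I W"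
  shows "card W * card (fperp K I W) = card K ^ card I"
  using I W
proof (induction I arbitrary: W rule: finite_induct)
  case empty
  have fv0: "fv K {} = {0}" using K(1) by (auto simp: fv_def fun_eq_iff subfieldD(1))
  have "W = {0}" using fsubD(1,2)[OF empty.prems] fv0 by auto
  moreover have "fperp K {} W = {0}" using fv0 by (auto simp: fperp_def)
  ultimately show ?case by simp
next
  case (insert a I W)
  note W = insert.prems
  have finW: "finite W" using finite_subset[OF fsubD(1)[OF W] finite_fv[OF _ K(2)]] insert.hyps(1)
    by simp
  let ?P = "fperp K (insert a I) W"
  have finP: "finite ?P" using finite_fv[OF _ K(2), of "insert a I"] insert.hyps(1)
    unfolding fperp_def by auto
  show ?case
  proof (cases "\<forall>w\<in>W. w a = 0")
    case True
    have WI: "W \<subseteq> fv K I"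
    proof
      fix x assume x: "x \<in> W"
      then have "x \<in> fv K (insert a I)" "x a = 0" using fsubD(1)[OF W] True by auto
      then show "x \<in> fv K I" unfolding fv_def by (simp, metis)
    qed
    have fsubI: "fsub K I W" using W WI by (rule fsub_reindex)
    have IH: "card W * card (fperp K I W) = card K ^ card I" by (rule insert.IH[OF fsubI])
    have "bij_betw (\<lambda>(v, t). v(a := t)) (fperp K I W \<times> K) ?P"
    proof (rule bij_betw_byWitness[where f'="\<lambda>u. (u(a := 0), u a)"])
      show "\<forall>p\<in>fperp K I W \<times> K. (\<lambda>u. (u(a := 0), u a)) ((\<lambda>(v, t). v(a := t)) p) = p"
      proof
        fix p assume "p \<in> fperp K I W \<times> K"
        then obtain v t where p: "p = (v, t)" "v \<in> fv K I" by (auto simp: fperp_def)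
        then have "v a = 0" using insert.hyps(2) unfolding fv_def by auto
        then show "(\<lambda>u. (u(a := 0), u a)) ((\<lambda>(v, t). v(a := t)) p) = p"
          using p by (auto simp: fun_eq_iff)
      qed
      show "\<forall>u\<in>?P. (\<lambda>(v, t). v(a := t)) (u(a := 0), u a) = u" by auto
      show "(\<lambda>(v, t). v(a := t)) ` (fperp K I W \<times> K) \<subseteq> ?P"
      proof
        fix u assume "u \<in> (\<lambda>(v, t). v(a := t)) ` (fperp K I W \<times> K)"
        then obtain v t where u: "u = v(a := t)" "v \<in> fperp K I W" "t \<in> K" by auto
        have "u \<in> fv K (insert a I)" using u unfolding fperp_def fv_def by auto
        moreover have "(\<Sum>i\<in>insert a I. w i * u i) = 0" if "w \<in> W" for w
        proof -
          have "(\<Sum>i\<in>insert a I. w i * u i) = w a * u a + (\<Sum>i\<in>I. w i * u i)"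
            using insert.hyps by simp
          also have "(\<Sum>i\<in>I. w i * u i) = (\<Sum>i\<in>I. w i * v i)"
            unfolding u(1) using insert.hyps(2) by (rule sum_upd_notin)
          also have "w a = 0" using True that by simp
          also have "0 * u a + (\<Sum>i\<in>I. w i * v i) = (\<Sum>i\<in>I. w i * v i)" by simp
          also have "\<dots> = 0" using u(2) that unfolding fperp_def by auto
          finally show ?thesis .
        qed
        ultimately show "u \<in> ?P" unfolding fperp_def by auto
      qed
      show "(\<lambda>u. (u(a := 0), u a)) ` ?P \<subseteq> fperp K I W \<times> K"
      proof
        fix p assume "p \<in> (\<lambda>u. (u(a := 0), u a)) ` ?P"
        then obtain u where p: "p = (u(a := 0), u a)" and u: "u \<in> ?P" by auto
        have ufv: "u \<in> fv K (insert a I)" using u unfolding fperp_def by auto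
        have "u(a := 0) \<in> fv K I" using ufv insert.hyps(2) subfieldD(1)[OF K(1)]
          by (rule fv_insert_restrict)
        moreover have "(\<Sum>i\<in>I. w i * (u(a := 0)) i) = 0" if "w \<in> W" for w
        proof -
          have "(\<Sum>i\<in>I. w i * (u(a := 0)) i) = (\<Sum>i\<in>I. w i * u i)"
            using insert.hyps(2) by (rule sum_upd_notin)
          also have "\<dots> = w a * u a + (\<Sum>i\<in>I. w i * u i)" using True that by simp
          also have "\<dots> = (\<Sum>i\<in>insert a I. w i * u i)" using insert.hyps by simp
          also have "\<dots> = 0" using u that unfolding fperp_def by auto
          finally show ?thesis .
        qed
        moreover have "u a \<in> K" using ufv unfolding fv_def by auto
        ultimately show "p \<in> fperp K I W \<times> K" unfolding p fperp_def by auto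
      qed
    qed
    then have "card ?P = card (fperp K I W \<times> K)" by (rule bij_betw_same_card[symmetric])
    also have "\<dots> = card (fperp K I W) * card K" by (rule card_cartesian_product)
    finally have "card W * card ?P = card K ^ card I * card K" using IH by (simp add: mult_ac)
    then show ?thesis using insert.hyps by simp
  next
    case False
    then obtain w1 where w1: "w1 \<in> W" "w1 a \<noteq> 0" by blast
    define w0 where "w0 = (\<lambda>i. inverse (w1 a) * w1 i)"
    have w1fv: "w1 \<in> fv K (insert a I)" using w1 fsubD(1)[OF W] by auto
    have "inverse (w1 a) \<in> K" using w1fv subfieldD(6)[OF K(1)] unfolding fv_def by auto
    then have w0W: "w0 \<in> W" unfolding w0_def using w1(1) by (rule fsubD(4)[OF W])
    have w0a: "w0 a = 1" using w1(2) by (simp add: w0_def)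
    have w0fv: "w0 \<in> fv K (insert a I)" using w0W fsubD(1)[OF W] by auto
    define W' where "W' = {w \<in> W. w a = 0}"
    have W'fv: "W' \<subseteq> fv K I" using fsubD(1)[OF W] unfolding W'_def fv_def by auto
    have fsubW': "fsub K I W'" unfolding fsub_def
    proof (intro conjI ballI)
      show "W' \<subseteq> fv K I" by (rule W'fv)
      show "0 \<in> W'" using fsubD(2)[OF W] by (simp add: W'_def)
      show "x + y \<in> W'" if "x \<in> W'" "y \<in> W'" for x y
        using that fsubD(3)[OF W] by (auto simp: W'_def)
      show "(\<lambda>i. c * x i) \<in> W'" if "c \<in> K" "x \<in> W'" for c x
        using that fsubD(4)[OF W] by (auto simp: W'_def)
    qed
    have IH: "card W' * card (fperp K I W') = card K ^ card I" by (rule insert.IH[OF fsubW'])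
    have KW: "w a \<in> K" if "w \<in> W" for w
      using that fsubD(1)[OF W] unfolding fv_def by auto
    have "bij_betw (\<lambda>(w', t). w' + (\<lambda>i. t * w0 i)) (W' \<times> K) W"
    proof (rule bij_betw_byWitness[where f'="\<lambda>w. (w - (\<lambda>i. w a * w0 i), w a)"])
      show "\<forall>p\<in>W' \<times> K. (\<lambda>w. (w - (\<lambda>i. w a * w0 i), w a)) ((\<lambda>(w', t). w' + (\<lambda>i. t * w0 i)) p) = p"
        using w0a by (auto simp: W'_def fun_eq_iff)
      show "\<forall>w\<in>W. (\<lambda>(w', t). w' + (\<lambda>i. t * w0 i)) (w - (\<lambda>i. w a * w0 i), w a) = w"
        by (auto simp: fun_eq_iff)
      show "(\<lambda>(w', t). w' + (\<lambda>i. t * w0 i)) ` (W' \<times> K) \<subseteq> W"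
      proof
        fix w assume "w \<in> (\<lambda>(w', t). w' + (\<lambda>i. t * w0 i)) ` (W' \<times> K)"
        then obtain w' t where w: "w = w' + (\<lambda>i. t * w0 i)" "w' \<in> W'" "t \<in> K" by auto
        have "(\<lambda>i. t * w0 i) \<in> W" using w(3) w0W by (rule fsubD(4)[OF W])
        moreover have "w' \<in> W" using w(2) by (simp add: W'_def)
        ultimately show "w \<in> W" unfolding w(1) by (intro fsubD(3)[OF W])
      qed
      show "(\<lambda>w. (w - (\<lambda>i. w a * w0 i), w a)) ` W \<subseteq> W' \<times> K"
      proof
        fix p assume "p \<in> (\<lambda>w. (w - (\<lambda>i. w a * w0 i), w a)) ` W"
        then obtain w where p: "p = (w - (\<lambda>i. w a * w0 i), w a)" and w: "w \<in> W" by auto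
        have "(\<lambda>i. w a * w0 i) \<in> W" using KW[OF w] w0W by (rule fsubD(4)[OF W])
        then have "w - (\<lambda>i. w a * w0 i) \<in> W" using w by (intro fsub_diff[OF K(1) W])
        then show "p \<in> W' \<times> K" using p w0a KW[OF w] by (auto simp: W'_def)
      qed
    qed
    then have cardW: "card W = card W' * card K"
      by (simp add: bij_betw_same_card[symmetric] card_cartesian_product)
    define s where "s y = (\<Sum>i\<in>I. w0 i * y i)" for y
    have "bij_betw (\<lambda>y. y(a := - s y)) (fperp K I W') ?P"
    proof (rule bij_betw_byWitness[where f'="\<lambda>v. v(a := 0)"])
      show "\<forall>y\<in>fperp K I W'. (y(a := - s y))(a := 0) = y"
      proof
        fix y assume "y \<in> fperp K I W'"
        then have "y a = 0" using insert.hyps(2) unfolding fperp_def fv_def by auto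
        then show "(y(a := - s y))(a := 0) = y" by (auto simp: fun_eq_iff)
      qed
      show "\<forall>v\<in>?P. (v(a := 0))(a := - s (v(a := 0))) = v"
      proof
        fix v assume v: "v \<in> ?P"
        have "(\<Sum>i\<in>insert a I. w0 i * v i) = 0" using v w0W unfolding fperp_def by auto
        then have "w0 a * v a + s v = 0" using insert.hyps by (simp add: s_def)
        then have "v a = - s v" using w0a by (simp add: eq_neg_iff_add_eq_0)
        moreover have "s (v(a := 0)) = s v" unfolding s_def using insert.hyps(2)
          by (rule sum_upd_notin)
        ultimately show "(v(a := 0))(a := - s (v(a := 0))) = v" by (auto simp: fun_eq_iff)
      qed
      show "(\<lambda>y. y(a := - s y)) ` fperp K I W' \<subseteq> ?P"
      proof
        fix u assume "u \<in> (\<lambda>y. y(a := - s y)) ` fperp K I W'"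
        then obtain y where u: "u = y(a := - s y)" and y: "y \<in> fperp K I W'" by auto
        have yfv: "y \<in> fv K I" using y unfolding fperp_def by auto
        have "s y \<in> K" unfolding s_def using w0fv yfv
          by (intro subfield_sum[OF K(1)] subfieldD(4)[OF K(1)]) (auto simp: fv_def)
        then have "- s y \<in> K" by (rule subfieldD(5)[OF K(1)])
        then have "u \<in> fv K (insert a I)" using yfv unfolding u fv_def by auto
        moreover have "(\<Sum>i\<in>insert a I. w i * u i) = 0" if w: "w \<in> W" for w
        proof -
          define w' where "w' = w - (\<lambda>i. w a * w0 i)"
          have "(\<lambda>i. w a * w0 i) \<in> W" using KW[OF w] w0W by (rule fsubD(4)[OF W])
          then have "w' \<in> W" unfolding w'_def using w by (intro fsub_diff[OF K(1) W])
          then have w'W': "w' \<in> W'" using w0a by (simp add: W'_def w'_def)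
          have "(\<Sum>i\<in>I. w i * u i) = (\<Sum>i\<in>I. w i * y i)"
            unfolding u using insert.hyps(2) by (rule sum_upd_notin)
          moreover have "(\<Sum>i\<in>insert a I. w i * u i) = w a * u a + (\<Sum>i\<in>I. w i * u i)"
            using insert.hyps by simp
          ultimately have "(\<Sum>i\<in>insert a I. w i * u i) = w a * u a + (\<Sum>i\<in>I. w i * y i)"
            by simp
          also have "(\<Sum>i\<in>I. w i * y i) = (\<Sum>i\<in>I. (w' i + w a * w0 i) * y i)"
            by (simp add: w'_def)
          also have "\<dots> = (\<Sum>i\<in>I. w' i * y i) + w a * s y"
            unfolding s_def distrib_right sum.distrib sum_distrib_left
            by (intro arg_cong2[where f="(+)"] sum.cong) (auto simp: mult_ac)
          also have "(\<Sum>i\<in>I. w' i * y i) = 0" using y w'W' unfolding fperp_def by auto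
          finally show ?thesis using u by simp
        qed
        ultimately show "u \<in> ?P" unfolding fperp_def by auto
      qed
      show "(\<lambda>v. v(a := 0)) ` ?P \<subseteq> fperp K I W'"
      proof
        fix y assume "y \<in> (\<lambda>v. v(a := 0)) ` ?P"
        then obtain v where y: "y = v(a := 0)" and v: "v \<in> ?P" by auto
        have vfv: "v \<in> fv K (insert a I)" using v unfolding fperp_def by auto
        have "y \<in> fv K I" unfolding y using vfv insert.hyps(2) subfieldD(1)[OF K(1)]
          by (rule fv_insert_restrict)
        moreover have "(\<Sum>i\<in>I. w i * y i) = 0" if w: "w \<in> W'" for w
        proof -
          have "(\<Sum>i\<in>I. w i * y i) = (\<Sum>i\<in>I. w i * v i)" unfolding y using insert.hyps(2)
            by (rule sum_upd_notin)
          also have "\<dots> = w a * v a + (\<Sum>i\<in>I. w i * v i)" using w by (simp add: W'_def)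
          also have "\<dots> = (\<Sum>i\<in>insert a I. w i * v i)" using insert.hyps by simp
          also have "\<dots> = 0" using v w unfolding fperp_def W'_def by auto
          finally show ?thesis .
        qed
        ultimately show "y \<in> fperp K I W'" unfolding fperp_def by auto
      qed
    qed
    then have "card ?P = card (fperp K I W')" by (rule bij_betw_same_card[symmetric])
    then have "card W * card ?P = card K * (card W' * card (fperp K I W'))"
      using cardW by (simp add: mult_ac)
    then show ?thesis using IH insert.hyps by simp
  qed
qed

lemma fsub_finite: "finite I \<Longrightarrow> finite K \<Longrightarrow> fsub K I W \<Longrightarrow> finite W"
  using finite_subset[OF fsubD(1) finite_fv] by blast

lemma fperp_fperp:
  assumes K: "subfield K" "finite K" and I: "finite I" and W: "fsub K I W"
  shows "fperp K I (fperp K I W) = W"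
proof -
  have sub: "W \<subseteq> fperp K I (fperp K I W)"
  proof
    fix w assume w: "w \<in> W"
    have "(\<Sum>i\<in>I. v i * w i) = 0" if "v \<in> fperp K I W" for v
    proof -
      have "(\<Sum>i\<in>I. v i * w i) = (\<Sum>i\<in>I. w i * v i)" by (simp add: mult.commute)
      also have "\<dots> = 0" using that w unfolding fperp_def by auto
      finally show ?thesis .
    qed
    then show "w \<in> fperp K I (fperp K I W)" using w fsubD(1)[OF W] unfolding fperp_def by auto
  qed
  have P: "fsub K I (fperp K I W)" by (rule fsub_fperp[OF K(1)])
  have c1: "card W * card (fperp K I W) = card K ^ card I" by (rule perp_card[OF K I W])
  have c2: "card (fperp K I W) * card (fperp K I (fperp K I W)) = card K ^ card I"
    by (rule perp_card[OF K I P])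
  have "card (fperp K I W) > 0"
    using fsubD(2)[OF P] fsub_finite[OF I K(2) P] by (auto simp: card_gt_0_iff)
  then have "card (fperp K I (fperp K I W)) = card W" using c1 c2
    by (metis mult.commute mult_left_cancel not_gr0)
  moreover have "finite (fperp K I (fperp K I W))" by (rule fsub_finite[OF I K(2) fsub_fperp[OF K(1)]])
  ultimately show ?thesis using sub by (metis card_subset_eq)
qed

definition setsum :: "'a::ab_group_add set \<Rightarrow> 'a set \<Rightarrow> 'a set" where
  "setsum X Y = {x + y | x y. x \<in> X \<and> y \<in> Y}"

lemma grassmann_card:
  fixes X Y :: "'a::ab_group_add set"
  assumes X: "finite X" "0 \<in> X" "\<And>x y. x \<in> X \<Longrightarrow> y \<in> X \<Longrightarrow> x - y \<in> X"
    and Y: "finite Y" "0 \<in> Y" "\<And>x y. x \<in> Y \<Longrightarrow> y \<in> Y \<Longrightarrow> x - y \<in> Y"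
  shows "card (setsum X Y) * card (X \<inter> Y) = card X * card Y"
proof -
  define r where "r s = (SOME x. x \<in> X \<and> s - x \<in> Y)" for s
  have r: "r s \<in> X \<and> s - r s \<in> Y" if "s \<in> setsum X Y" for s
  proof -
    from that obtain x y where "s = x + y" "x \<in> X" "y \<in> Y" unfolding setsum_def by blast
    then have "\<exists>x. x \<in> X \<and> s - x \<in> Y" by (intro exI[of _ x]) simp
    then show ?thesis unfolding r_def by (rule someI_ex)
  qed
  have "bij_betw (\<lambda>(x, y). (x + y, x - r (x + y))) (X \<times> Y) (setsum X Y \<times> (X \<inter> Y))"
  proof (rule bij_betw_byWitness[where f'="\<lambda>(s, z). (r s + z, s - r s - z)"])
    show "\<forall>p\<in>X \<times> Y. (\<lambda>(s, z). (r s + z, s - r s - z)) ((\<lambda>(x, y). (x + y, x - r (x + y))) p) = p"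
      by (simp add: algebra_simps)
    show "\<forall>p\<in>setsum X Y \<times> (X \<inter> Y). (\<lambda>(x, y). (x + y, x - r (x + y))) ((\<lambda>(s, z). (r s + z, s - r s - z)) p) = p"
    proof
      fix p assume "p \<in> setsum X Y \<times> (X \<inter> Y)"
      obtain s z where p: "p = (s, z)" by (cases p)
      have "r s + z + (s - r s - z) = s" by (simp add: algebra_simps)
      then show "(\<lambda>(x, y). (x + y, x - r (x + y))) ((\<lambda>(s, z). (r s + z, s - r s - z)) p) = p"
        unfolding p by simp
    qed
    show "(\<lambda>(x, y). (x + y, x - r (x + y))) ` (X \<times> Y) \<subseteq> setsum X Y \<times> (X \<inter> Y)"
    proof
      fix p assume "p \<in> (\<lambda>(x, y). (x + y, x - r (x + y))) ` (X \<times> Y)"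
      then obtain x y where p: "p = (x + y, x - r (x + y))" and xy: "x \<in> X" "y \<in> Y" by auto
      have s: "x + y \<in> setsum X Y" using xy unfolding setsum_def by blast
      have "x - r (x + y) \<in> X" using X(3) xy(1) r[OF s] by blast
      moreover have "(x + y - r (x + y)) - y \<in> Y" using Y(3)[OF conjunct2[OF r[OF s]] xy(2)] .
      then have "x - r (x + y) \<in> Y" by (simp add: algebra_simps)
      ultimately show "p \<in> setsum X Y \<times> (X \<inter> Y)" using p s by auto
    qed
    show "(\<lambda>(s, z). (r s + z, s - r s - z)) ` (setsum X Y \<times> (X \<inter> Y)) \<subseteq> X \<times> Y"
    proof
      fix p assume "p \<in> (\<lambda>(s, z). (r s + z, s - r s - z)) ` (setsum X Y \<times> (X \<inter> Y))"
      then obtain s z where p: "p = (r s + z, s - r s - z)" and sz: "s \<in> setsum X Y" "z \<in> X \<inter> Y"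
        by auto
      have "0 - z \<in> X" using X(3)[OF X(2)] sz(2) by blast
      then have "r s - (0 - z) \<in> X" using X(3) conjunct1[OF r[OF sz(1)]] by blast
      then have "r s + z \<in> X" by simp
      moreover have "s - r s - z \<in> Y" using Y(3) sz(2) r[OF sz(1)] by blast
      ultimately show "p \<in> X \<times> Y" using p by auto
    qed
  qed
  then have "card (X \<times> Y) = card (setsum X Y \<times> (X \<inter> Y))" by (rule bij_betw_same_card)
  then show ?thesis by (simp add: card_cartesian_product)
qed

lemma fperp_setsum:
  assumes "0 \<in> X" "0 \<in> Y"
  shows "fperp K I (setsum X Y) = fperp K I X \<inter> fperp K I Y"
proof
  show "fperp K I (setsum X Y) \<subseteq> fperp K I X \<inter> fperp K I Y"
  proof
    fix v assume v: "v \<in> fperp K I (setsum X Y)"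
    have "x \<in> setsum X Y" if "x \<in> X" for x using that assms(2) unfolding setsum_def
      by (intro CollectI exI[of _ x] exI[of _ 0]) simp
    moreover have "y \<in> setsum X Y" if "y \<in> Y" for y using that assms(1) unfolding setsum_def
      by (intro CollectI exI[of _ 0] exI[of _ y]) simp
    ultimately show "v \<in> fperp K I X \<inter> fperp K I Y" using v unfolding fperp_def by blast
  qed
  show "fperp K I X \<inter> fperp K I Y \<subseteq> fperp K I (setsum X Y)"
  proof
    fix v assume v: "v \<in> fperp K I X \<inter> fperp K I Y"
    have "(\<Sum>i\<in>I. w i * v i) = 0" if "w \<in> setsum X Y" for w
    proof -
      from that obtain x y where w: "w = x + y" "x \<in> X" "y \<in> Y" unfolding setsum_def by blast
      have "(\<Sum>i\<in>I. w i * v i) = (\<Sum>i\<in>I. x i * v i) + (\<Sum>i\<in>I. y i * v i)"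
        unfolding w by (simp add: distrib_right sum.distrib)
      then show ?thesis using v w unfolding fperp_def by auto
    qed
    then show "v \<in> fperp K I (setsum X Y)" using v unfolding fperp_def by blast
  qed
qed

lemma fsub_setsum:
  assumes K: "subfield K" and X: "fsub K I X" and Y: "fsub K I Y"
  shows "fsub K I (setsum X Y)"
  unfolding fsub_def
proof (intro conjI ballI)
  show "setsum X Y \<subseteq> fv K I"
  proof
    fix u assume "u \<in> setsum X Y"
    then obtain x y where u: "u = x + y" "x \<in> X" "y \<in> Y" unfolding setsum_def by blast
    show "u \<in> fv K I" unfolding u(1) using fsubD(1)[OF X] fsubD(1)[OF Y] u(2,3)
      by (intro fv_add[OF K]) auto
  qed
  show "0 \<in> setsum X Y" using fsubD(2)[OF X] fsubD(2)[OF Y] unfolding setsum_def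
    by (intro CollectI exI[of _ 0] exI[of _ 0]) simp
next
  fix u v assume "u \<in> setsum X Y" "v \<in> setsum X Y"
  then obtain x1 y1 x2 y2 where "u = x1 + y1" "v = x2 + y2" "x1 \<in> X" "y1 \<in> Y" "x2 \<in> X" "y2 \<in> Y"
    unfolding setsum_def by blast
  moreover have "x1 + y1 + (x2 + y2) = (x1 + x2) + (y1 + y2)" by (simp add: add_ac)
  moreover have "x1 + x2 \<in> X" "y1 + y2 \<in> Y" using calculation(3-6) fsubD(3)[OF X] fsubD(3)[OF Y]
    by auto
  ultimately show "u + v \<in> setsum X Y" unfolding setsum_def
    by (intro CollectI exI[of _ "x1 + x2"] exI[of _ "y1 + y2"]) simp
next
  fix c u assume c: "c \<in> K" and "u \<in> setsum X Y"
  then obtain x y where xy: "u = x + y" "x \<in> X" "y \<in> Y" unfolding setsum_def by blast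
  have "(\<lambda>i. c * u i) = (\<lambda>i. c * x i) + (\<lambda>i. c * y i)" unfolding xy by (simp add: fun_eq_iff distrib_left)
  then show "(\<lambda>i. c * u i) \<in> setsum X Y" using fsubD(4)[OF X c xy(2)] fsubD(4)[OF Y c xy(3)]
    unfolding setsum_def by (intro CollectI exI[of _ "\<lambda>i. c * x i"] exI[of _ "\<lambda>i. c * y i"]) simp
qed

theorem perp_inter_card:
  assumes K: "subfield K" "finite K" and I: "finite I" and X: "fsub K I X" and Y: "fsub K I Y"
  shows "card (fperp K I X \<inter> fperp K I Y) * card X * card Y = card K ^ card I * card (X \<inter> Y)"
proof -
  have S: "fsub K I (setsum X Y)" by (rule fsub_setsum[OF K(1) X Y])
  have g: "card (setsum X Y) * card (X \<inter> Y) = card X * card Y"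
    by (rule grassmann_card) (use fsub_finite[OF I K(2)] X Y fsub_diff[OF K(1)] fsubD(2) in auto)
  have p: "card (setsum X Y) * card (fperp K I (setsum X Y)) = card K ^ card I"
    by (rule perp_card[OF K I S])
  have e: "fperp K I (setsum X Y) = fperp K I X \<inter> fperp K I Y"
    by (rule fperp_setsum[OF fsubD(2)[OF X] fsubD(2)[OF Y]])
  have "card (fperp K I X \<inter> fperp K I Y) * card X * card Y
      = card (fperp K I (setsum X Y)) * (card (setsum X Y) * card (X \<inter> Y))"
    using g e by (simp add: mult_ac)
  also have "\<dots> = card K ^ card I * card (X \<inter> Y)" using p by (simp add: mult_ac)
  finally show ?thesis .
qed

lemma subfield_pow_card:
  assumes K: "subfield K" "finite K" and x: "x \<in> K"
  shows "x ^ card K = x"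
proof (cases "x = 0")
  case True
  have "card K > 0" using K subfieldD(1)[OF K(1)] by (auto simp: card_gt_0_iff)
  then show ?thesis using True by simp
next
  case False
  let ?K = "K - {0}"
  have "(\<Prod>y\<in>?K. x * y) = (\<Prod>y\<in>?K. y)"
  proof (rule prod.reindex_bij_witness[of _ "\<lambda>y. inverse x * y" "\<lambda>y. x * y"])
    fix y assume "y \<in> ?K"
    then show "inverse x * y \<in> ?K" using False x subfieldD(4,6)[OF K(1)] by auto
  next
    fix y assume "y \<in> ?K"
    then show "x * y \<in> ?K" using False x subfieldD(4)[OF K(1)] by auto
  qed (use False in auto)
  then have "x ^ card ?K * (\<Prod>y\<in>?K. y) = (\<Prod>y\<in>?K. y)" by (simp add: prod.distrib)
  moreover have "(\<Prod>y\<in>?K. y) \<noteq> 0" using K(2) by simp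
  ultimately have "x ^ card ?K = 1" by simp
  moreover have "card K = Suc (card ?K)"
  proof -
    have "card K > 0" using K subfieldD(1)[OF K(1)] by (auto simp: card_gt_0_iff)
    moreover have "card ?K = card K - 1" using K(2) subfieldD(1)[OF K(1)] by simp
    ultimately show ?thesis by simp
  qed
  ultimately show ?thesis by simp
qed

lemma subfield_pow_card_pow:
  assumes K: "subfield K" "finite K" and x: "x \<in> K"
  shows "x ^ (card K ^ i) = x"
proof (induction i)
  case (Suc i)
  have "x ^ (card K ^ Suc i) = (x ^ (card K ^ i)) ^ card K" by (simp only: power_Suc2 power_mult)
  then show ?case using Suc subfield_pow_card[OF K x] by simp
qed simp

lemma prime_subfield:
  assumes fin: "finite (UNIV :: 'b::field set)"
  defines "P \<equiv> range (of_nat :: nat \<Rightarrow> 'b)"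
  shows "subfield P" "card P = CHAR('b)" "finite P"
proof -
  have Cpos: "CHAR('b) > 0" using finite_imp_CHAR_pos[OF fin] .
  have mod: "(of_nat n :: 'b) = of_nat (n mod CHAR('b))" for n
    by (simp add: of_nat_eq_iff_cong_CHAR cong_def)
  have Peq: "P = of_nat ` {..<CHAR('b)}"
  proof
    show "P \<subseteq> of_nat ` {..<CHAR('b)}"
    proof
      fix x assume "x \<in> P"
      then obtain n where n: "x = of_nat n" unfolding P_def by auto
      have "n mod CHAR('b) < CHAR('b)" using Cpos by simp
      then show "x \<in> of_nat ` {..<CHAR('b)}" unfolding n mod[of n] by simp
    qed
  qed (auto simp: P_def)
  show "card P = CHAR('b)" unfolding Peq
    by (subst card_image) (auto intro!: inj_onI simp: of_nat_eq_iff_cong_CHAR cong_def)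
  show finP: "finite P" unfolding Peq by simp
  have add: "x + y \<in> P" if "x \<in> P" "y \<in> P" for x y
    using that unfolding P_def by (auto simp flip: of_nat_add)
  have mul: "x * y \<in> P" if "x \<in> P" "y \<in> P" for x y
    using that unfolding P_def by (auto simp flip: of_nat_mult)
  have neg: "- x \<in> P" if "x \<in> P" for x
  proof -
    from that obtain n where n: "x = of_nat n" unfolding P_def by auto
    have e: "(CHAR('b) - 1) * n + n = CHAR('b) * n" using Cpos by (cases "CHAR('b)") auto
    have "(of_nat ((CHAR('b) - 1) * n) :: 'b) + of_nat n = of_nat (CHAR('b) * n)"
      by (simp only: of_nat_add[symmetric] e)
    also have "\<dots> = 0" by simp
    finally have "of_nat n + (of_nat ((CHAR('b) - 1) * n) :: 'b) = 0" by (simp only: add.commute)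
    then have "- x = of_nat ((CHAR('b) - 1) * n)" unfolding n by (simp only: neg_eq_iff_add_eq_0)
    then show ?thesis unfolding P_def by (simp only: rangeI)
  qed
  have inv: "inverse x \<in> P" if "x \<in> P" for x
  proof (cases "x = 0")
    case True then show ?thesis using that by simp
  next
    case False
    have "(\<lambda>y. x * y) ` P = P"
      by (rule endo_inj_surj[OF finP]) (use mul that False in \<open>auto intro: inj_onI\<close>)
    moreover have "1 \<in> P" unfolding P_def by (metis of_nat_1 rangeI)
    ultimately obtain y where "y \<in> P" "x * y = 1" by (metis imageE)
    then have "inverse x = y" using False by (metis inverse_unique)
    then show ?thesis using \<open>y \<in> P\<close> by simp
  qed
  show "subfield P" unfolding subfield_def
    using add mul neg inv by (auto simp: P_def intro: range_eqI[of _ _ 0] range_eqI[of _ _ 1])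
qed

lemma card_subfield_CHAR_power:
  assumes fin: "finite (UNIV :: 'b::field set)" and K: "subfield (K :: 'b set)"
  shows "\<exists>e. card K = CHAR('b) ^ e"
proof -
  define P where "P = range (of_nat :: nat \<Rightarrow> 'b)"
  note Pf = prime_subfield[OF fin, folded P_def]
  interpret smod P "(*) :: 'b \<Rightarrow> 'b \<Rightarrow> 'b"
    by unfold_locales (auto simp: Pf algebra_simps)
  have PK: "of_nat n \<in> K" for n
    by (induction n) (auto intro: subfieldD(1,2,3)[OF K])
  have "ksubspace P (*) K" unfolding ksubspace_def
    using PK subfieldD(1,3,4)[OF K] by (auto simp: P_def)
  then have "card K = card P ^ kdim P (*) K" by (rule card_kdim) (rule finite_subset[OF _ fin], simp)
  then show ?thesis using Pf by auto
qed

lemma frob_add: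
  fixes x y :: "'b::field"
  assumes fin: "finite (UNIV :: 'b set)" and K: "subfield (K :: 'b set)"
  shows "(x + y) ^ (card K ^ i) = x ^ (card K ^ i) + y ^ (card K ^ i)"
proof -
  obtain e where e: "card K = CHAR('b) ^ e" using card_subfield_CHAR_power[OF fin K] by blast
  have pr: "prime CHAR('b)" by (rule prime_CHAR_semidom[OF finite_imp_CHAR_pos[OF fin]])
  show ?thesis unfolding e power_mult[symmetric]
    by (rule freshmans_dream') (simp_all add: pr)
qed

lemma vecs_fv: "vecs K N = fv K {..<N}"
  unfolding vecs_def fv_def by auto

lemma perp_fperp: "perp K N W = fperp K {..<N} W"
  unfolding perp_def fperp_def vecs_fv dotp_def by simp

lemma vsc_eq: "vsc c x = (\<lambda>i. c * x i)"
  by (simp add: vsc_def)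

lemma fsub_iff: "fsub K {..<N} A \<longleftrightarrow> A \<subseteq> vecs K N \<and> ksubspace K vsc A"
  unfolding fsub_def ksubspace_def vecs_fv vsc_eq by auto

lemma smod_vsc: "subfield K \<Longrightarrow> finite K \<Longrightarrow> smod K (vsc :: 'b::field \<Rightarrow> (nat \<Rightarrow> 'b) \<Rightarrow> _)"
  by unfold_locales (auto simp: vsc_def fun_eq_iff algebra_simps)

lemma smod_msc: "subfield K \<Longrightarrow> finite K \<Longrightarrow> smod K (msc :: 'b::field \<Rightarrow> (nat \<Rightarrow> nat \<Rightarrow> 'b) \<Rightarrow> _)"
  by unfold_locales (auto simp: msc_def fun_eq_iff algebra_simps)

section \<open>Coordinates\<close>

locale basis_ctx =
  fixes K :: "'b::field set" and m :: nat and h :: "nat \<Rightarrow> 'b"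
  assumes K: "subfield K" and B: "is_basis K m h"
begin

lemma indep: "(\<forall>j<m. c j \<in> K) \<Longrightarrow> (\<Sum>j<m. c j * h j) = 0 \<Longrightarrow> j < m \<Longrightarrow> c j = 0"
  using B unfolding is_basis_def by blast

lemma span: "\<exists>c. (\<forall>j<m. c j \<in> K) \<and> x = (\<Sum>j<m. c j * h j)"
  using B unfolding is_basis_def by blast

lemma coord_uniq:
  assumes c: "c \<in> vecs K m" "x = (\<Sum>j<m. c j * h j)"
    and d: "d \<in> vecs K m" "x = (\<Sum>j<m. d j * h j)"
  shows "c = d"
proof
  fix j
  show "c j = d j"
  proof (cases "j < m")
    case True
    have "(\<Sum>j<m. (c j - d j) * h j) = 0" using c(2) d(2)
      by (simp add: left_diff_distrib sum_subtractf)
    moreover have "\<forall>j<m. c j - d j \<in> K" using c(1) d(1) subfieldD(7)[OF K] by (auto simp: vecs_def)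
    ultimately have "c j - d j = 0" using True indep[of "\<lambda>j. c j - d j"] by blast
    then show ?thesis by simp
  next
    case False then show ?thesis using c(1) d(1) by (simp add: vecs_def)
  qed
qed

lemma coord_ex: "\<exists>c. c \<in> vecs K m \<and> x = (\<Sum>j<m. c j * h j)"
proof -
  obtain c where c: "\<forall>j<m. c j \<in> K" "x = (\<Sum>j<m. c j * h j)" using span by blast
  define c' where "c' j = (if j < m then c j else 0)" for j
  have "c' \<in> vecs K m" using c(1) by (simp add: vecs_def c'_def)
  moreover have "x = (\<Sum>j<m. c' j * h j)" using c(2) by (simp add: c'_def)
  ultimately show ?thesis by blast
qed

lemma coord_spec: "coord K m h x \<in> vecs K m \<and> x = (\<Sum>j<m. coord K m h x j * h j)"
proof -
  have *: "(\<lambda>c. (\<forall>j<m. c j \<in> K) \<and> (\<forall>j\<ge>m. c j = 0) \<and> x = (\<Sum>j<m. c j * h j))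
      = (\<lambda>c. c \<in> vecs K m \<and> x = (\<Sum>j<m. c j * h j))"
    by (auto simp: vecs_def fun_eq_iff)
  obtain c where c: "c \<in> vecs K m" "x = (\<Sum>j<m. c j * h j)" using coord_ex by blast
  have "(THE c. c \<in> vecs K m \<and> x = (\<Sum>j<m. c j * h j)) \<in> vecs K m \<and>
        x = (\<Sum>j<m. (THE c. c \<in> vecs K m \<and> x = (\<Sum>j<m. c j * h j)) j * h j)"
    by (rule theI[of _ c]) (use c coord_uniq in blast)+
  then show ?thesis unfolding coord_def * .
qed

lemma coord_vecs: "coord K m h x \<in> vecs K m"
  using coord_spec by blast

lemma coord_sum: "x = (\<Sum>j<m. coord K m h x j * h j)"
  using coord_spec by blast

lemma coord_K: "coord K m h x j \<in> K"
  using coord_vecs subfieldD(1)[OF K] by (cases "j < m") (auto simp: vecs_def)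

lemma coord_high: "j \<ge> m \<Longrightarrow> coord K m h x j = 0"
  using coord_vecs by (auto simp: vecs_def)

lemma coord_of: "c \<in> vecs K m \<Longrightarrow> coord K m h (\<Sum>j<m. c j * h j) = c"
  using coord_uniq[OF coord_vecs coord_sum] by blast

lemma coord_lin:
  assumes a: "a \<in> K"
  shows "coord K m h (a * x + y) = (\<lambda>j. a * coord K m h x j + coord K m h y j)"
proof -
  let ?c = "\<lambda>j. a * coord K m h x j + coord K m h y j"
  have "?c \<in> vecs K m" using coord_vecs[of x] coord_vecs[of y] a subfieldD(3,4)[OF K]
    by (auto simp: vecs_def)
  moreover have "a * x + y = (\<Sum>j<m. ?c j * h j)"
  proof -
    have "(\<Sum>j<m. ?c j * h j) = a * (\<Sum>j<m. coord K m h x j * h j) + (\<Sum>j<m. coord K m h y j * h j)"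
      by (simp add: distrib_right sum.distrib sum_distrib_left mult.assoc)
    also have "\<dots> = a * x + y" using coord_sum[of x, symmetric] coord_sum[of y, symmetric] by simp
    finally show ?thesis by simp
  qed
  ultimately show ?thesis using coord_of by metis
qed

lemma coord_add: "coord K m h (x + y) = (\<lambda>j. coord K m h x j + coord K m h y j)"
  using coord_lin[OF subfieldD(2)[OF K], of x y] by simp

lemma coord_scale: "a \<in> K \<Longrightarrow> coord K m h (a * x) = (\<lambda>j. a * coord K m h x j)"
  using coord_lin[of a x 0] coord_of[of "\<lambda>_. 0"] subfieldD(1)[OF K]
  by (simp add: vecs_def)

lemma coord_zero: "coord K m h 0 = (\<lambda>_. 0)"
  using coord_of[of "\<lambda>_. 0"] subfieldD(1)[OF K] by (simp add: vecs_def)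

lemma coord_inj: "coord K m h x = coord K m h y \<Longrightarrow> x = y"
  using coord_sum[of x] coord_sum[of y] by metis

lemma coord_bij: "bij_betw (coord K m h) UNIV (vecs K m)"
  by (rule bij_betw_byWitness[where f'="\<lambda>c. \<Sum>j<m. c j * h j"])
     (use coord_sum coord_of coord_vecs in auto)

lemma card_UNIV: "card (UNIV :: 'b set) = card K ^ m"
  using bij_betw_same_card[OF coord_bij] card_fv[of "{..<m}" K] by (simp add: vecs_fv)

end

section \<open>Trace\<close>

lemma trace_add:
  assumes fin: "finite (UNIV :: 'b::field set)" and K: "subfield (K :: 'b set)"
  shows "trace K m (x + y) = trace K m x + trace K m y"
  unfolding trace_def by (simp add: frob_add[OF fin K] sum.distrib)

lemma trace_scale:
  assumes fin: "finite (UNIV :: 'b::field set)" and K: "subfield (K :: 'b set)" and a: "a \<in> K"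
  shows "trace K m (a * x) = a * trace K m x"
proof -
  have fK: "finite K" using fin by (rule finite_subset[rotated]) simp
  show ?thesis unfolding trace_def
    by (simp add: power_mult_distrib subfield_pow_card_pow[OF K fK a] sum_distrib_left)
qed

lemma trace_zero: "card K > 0 \<Longrightarrow> trace K m (0 :: 'b::field) = 0"
  unfolding trace_def by (intro sum.neutral) (simp add: power_0_left)

lemma trace_sum:
  assumes fin: "finite (UNIV :: 'b::field set)" and K: "subfield (K :: 'b set)"
  shows "trace K m (sum f F) = (\<Sum>i\<in>F. trace K m (f i))"
proof -
  have "card K > 0" using K fin subfieldD(1)[OF K] by (auto simp: card_gt_0_iff intro: finite_subset)
  then show ?thesis
    by (induction F rule: infinite_finite_induct) (auto simp: trace_zero trace_add[OF fin K])
qed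

definition flat :: "(nat \<Rightarrow> nat \<Rightarrow> 'b) \<Rightarrow> (nat \<times> nat \<Rightarrow> 'b)" where
  "flat M = (\<lambda>p. M (fst p) (snd p))"

definition I2 :: "nat \<Rightarrow> nat \<Rightarrow> (nat \<times> nat) set" where
  "I2 n m = {..<n} \<times> {..<m}"

definition mats :: "'b::field set \<Rightarrow> nat \<Rightarrow> nat \<Rightarrow> (nat \<Rightarrow> nat \<Rightarrow> 'b) set" where
  "mats K n m = {M. flat M \<in> fv K (I2 n m)}"

definition mp :: "'b::field set \<Rightarrow> nat \<Rightarrow> nat \<Rightarrow> (nat \<Rightarrow> nat \<Rightarrow> 'b) set \<Rightarrow> (nat \<Rightarrow> nat \<Rightarrow> 'b) set" where
  "mp K n m D = {N. flat N \<in> fperp K (I2 n m) (flat ` D)}"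

definition msub :: "'b::field set \<Rightarrow> nat \<Rightarrow> nat \<Rightarrow> (nat \<Rightarrow> nat \<Rightarrow> 'b) set \<Rightarrow> bool" where
  "msub K n m D \<longleftrightarrow> fsub K (I2 n m) (flat ` D)"

definition Wc :: "'b::field set \<Rightarrow> nat \<Rightarrow> nat \<Rightarrow> (nat \<Rightarrow> 'b) set \<Rightarrow> (nat \<Rightarrow> nat \<Rightarrow> 'b) set" where
  "Wc K n m U = {M \<in> mats K n m. \<forall>j<m. (\<lambda>i. M i j) \<in> U}"

definition Wr :: "'b::field set \<Rightarrow> nat \<Rightarrow> nat \<Rightarrow> (nat \<Rightarrow> 'b) set \<Rightarrow> (nat \<Rightarrow> nat \<Rightarrow> 'b) set" where
  "Wr K n m L = {M \<in> mats K n m. \<forall>i<n. (\<lambda>j. M i j) \<in> L}"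

lemma inj_flat: "inj flat"
proof (rule injI)
  fix x y :: "nat \<Rightarrow> nat \<Rightarrow> 'b" assume e: "flat x = flat y"
  have "x i j = y i j" for i j using fun_cong[OF e, of "(i, j)"] by (simp add: flat_def)
  then show "x = y" by (simp add: fun_eq_iff)
qed

lemma flat_unflat: "flat (\<lambda>i j. v (i, j)) = v"
  by (simp add: flat_def)

lemma flat_image_pre: "flat ` {N. flat N \<in> S} = S"
proof
  show "S \<subseteq> flat ` {N. flat N \<in> S}"
  proof
    fix x assume "x \<in> S"
    then show "x \<in> flat ` {N. flat N \<in> S}" using flat_unflat[of x]
      by (intro image_eqI[of _ _ "\<lambda>i j. x (i, j)"]) auto
  qed
qed auto

lemma card_flat: "card (flat ` D) = card D"
  by (rule card_image[OF inj_on_subset[OF inj_flat subset_UNIV]])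

lemma flat_Int: "flat ` (X \<inter> Y) = flat ` X \<inter> flat ` Y"
  by (rule image_Int[OF inj_flat])

lemma finite_I2: "finite (I2 n m)" by (simp add: I2_def)
lemma card_I2: "card (I2 n m) = n * m" by (simp add: I2_def card_cartesian_product)

lemma flat_add: "flat (M + N) = flat M + flat N" by (simp add: flat_def fun_eq_iff)
lemma flat_msc: "flat (msc c M) = (\<lambda>p. c * flat M p)" by (simp add: flat_def msc_def)
lemma flat_zero: "flat 0 = 0" by (simp add: flat_def fun_eq_iff)

lemma mats_iff: "M \<in> mats K n m \<longleftrightarrow> (\<forall>i<n. \<forall>j<m. M i j \<in> K) \<and> (\<forall>i j. \<not> (i < n \<and> j < m) \<longrightarrow> M i j = 0)"
  unfolding mats_def fv_def I2_def flat_def by auto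

lemma msub_iff: "msub K n m D \<longleftrightarrow> D \<subseteq> mats K n m \<and> ksubspace K msc D"
proof -
  have a: "flat ` D \<subseteq> fv K (I2 n m) \<longleftrightarrow> D \<subseteq> mats K n m" unfolding mats_def by auto
  have b: "0 \<in> flat ` D \<longleftrightarrow> 0 \<in> D" using inj_flat flat_zero by (metis inj_image_mem_iff)
  have c: "(\<forall>x\<in>flat ` D. \<forall>y\<in>flat ` D. x + y \<in> flat ` D) \<longleftrightarrow> (\<forall>x\<in>D. \<forall>y\<in>D. x + y \<in> D)"
    by (simp add: inj_image_mem_iff[OF inj_flat] flip: flat_add)
  have d: "(\<forall>c\<in>K. \<forall>x\<in>flat ` D. (\<lambda>i. c * x i) \<in> flat ` D) \<longleftrightarrow> (\<forall>c\<in>K. \<forall>x\<in>D. msc c x \<in> D)"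
    by (simp add: inj_image_mem_iff[OF inj_flat] flip: flat_msc)
  show ?thesis unfolding msub_def fsub_def ksubspace_def a b c d by blast
qed

context
  fixes K :: "'b::field set" and n m :: nat
  assumes K: "subfield K" "finite K"
begin

lemma msub_finite: "msub K n m D \<Longrightarrow> finite D"
  using fsub_finite[OF finite_I2 K(2)] unfolding msub_def
  by (metis finite_image_iff inj_flat inj_on_subset subset_UNIV)

lemma card_kdim_m: "msub K n m D \<Longrightarrow> card D = card K ^ kdim K msc D"
  using smod.card_kdim[OF smod_msc[OF K]] msub_finite msub_iff by blast

lemma kdim_m_eqI: "msub K n m D \<Longrightarrow> card D = card K ^ k \<Longrightarrow> kdim K msc D = k"
  using smod.kdim_eqI[OF smod_msc[OF K]] msub_finite msub_iff by blast

lemma msub_mp: "msub K n m (mp K n m D)"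
  unfolding msub_def mp_def flat_image_pre by (rule fsub_fperp[OF K(1)])

lemma card_mp: "msub K n m D \<Longrightarrow> card D * card (mp K n m D) = card K ^ (n * m)"
  using perp_card[OF K finite_I2, of n m "flat ` D"] unfolding msub_def mp_def
  by (metis card_I2 card_flat flat_image_pre)

lemma msub_Int: "msub K n m X \<Longrightarrow> msub K n m Y \<Longrightarrow> msub K n m (X \<inter> Y)"
  unfolding msub_iff ksubspace_def by blast

lemma mp_inter_card:
  assumes "msub K n m X" "msub K n m Y"
  shows "card (mp K n m X \<inter> mp K n m Y) * card X * card Y = card K ^ (n * m) * card (X \<inter> Y)"
proof -
  have "flat ` (mp K n m X \<inter> mp K n m Y) = fperp K (I2 n m) (flat ` X) \<inter> fperp K (I2 n m) (flat ` Y)"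
    unfolding flat_Int mp_def flat_image_pre ..
  then have "card (mp K n m X \<inter> mp K n m Y) = card (fperp K (I2 n m) (flat ` X) \<inter> fperp K (I2 n m) (flat ` Y))"
    by (metis card_flat)
  then show ?thesis
    using perp_inter_card[OF K finite_I2, of n m "flat ` X" "flat ` Y"] assms
    unfolding msub_def by (simp add: card_flat card_I2 flip: flat_Int)
qed

lemma mp_sum: "N \<in> mp K n m D \<longleftrightarrow> N \<in> mats K n m \<and> (\<forall>M\<in>D. (\<Sum>i<n. \<Sum>j<m. M i j * N i j) = 0)"
proof -
  have "(\<Sum>p\<in>I2 n m. flat M p * flat N p) = (\<Sum>i<n. \<Sum>j<m. M i j * N i j)" for M
    unfolding I2_def flat_def sum.cartesian_product by (simp add: case_prod_beta)
  then show ?thesis unfolding mp_def fperp_def mats_def by auto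
qed

end

context
  fixes K :: "'b::field set" and n m :: nat
  assumes K: "subfield K" "finite K"
begin

lemma fsub_vecs: "fsub K {..<N} U \<Longrightarrow> U \<subseteq> vecs K N"
  using fsubD(1) vecs_fv by blast

lemma Wc_msub:
  assumes U: "fsub K {..<n} U"
  shows "msub K n m (Wc K n m U)"
  unfolding msub_iff ksubspace_def
proof (intro conjI ballI)
  show "Wc K n m U \<subseteq> mats K n m" by (auto simp: Wc_def)
  have "(\<lambda>i. (0::'b)) \<in> U" using fsubD(2)[OF U] by (simp add: zero_fun_def)
  then show "0 \<in> Wc K n m U" using K(1) by (simp add: Wc_def mats_iff subfieldD(1))
next
  fix x y assume x: "x \<in> Wc K n m U" and y: "y \<in> Wc K n m U"
  have "(\<lambda>i. (x + y) i j) = (\<lambda>i. x i j) + (\<lambda>i. y i j)" for j by (simp add: fun_eq_iff)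
  then show "x + y \<in> Wc K n m U" using x y fsubD(3)[OF U] subfieldD(3)[OF K(1)]
    by (auto simp: Wc_def mats_iff)
next
  fix c x assume c: "c \<in> K" and x: "x \<in> Wc K n m U"
  have "(\<lambda>i. msc c x i j) = (\<lambda>i. c * (\<lambda>i. x i j) i)" for j by (simp add: msc_def)
  then show "msc c x \<in> Wc K n m U" using x c fsubD(4)[OF U c] subfieldD(4)[OF K(1)]
    by (auto simp: Wc_def mats_iff msc_def)
qed

lemma Wr_msub:
  assumes L: "fsub K {..<m} L"
  shows "msub K n m (Wr K n m L)"
  unfolding msub_iff ksubspace_def
proof (intro conjI ballI)
  show "Wr K n m L \<subseteq> mats K n m" by (auto simp: Wr_def)
  have "(\<lambda>i. (0::'b)) \<in> L" using fsubD(2)[OF L] by (simp add: zero_fun_def)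
  then show "0 \<in> Wr K n m L" using K(1) fsubD(2)[OF L] by (simp add: Wr_def mats_iff subfieldD(1))
next
  fix x y assume x: "x \<in> Wr K n m L" and y: "y \<in> Wr K n m L"
  have "(\<lambda>j. (x + y) i j) = (\<lambda>j. x i j) + (\<lambda>j. y i j)" for i by (simp add: fun_eq_iff)
  then show "x + y \<in> Wr K n m L" using x y fsubD(3)[OF L] subfieldD(3)[OF K(1)]
    by (auto simp: Wr_def mats_iff)
next
  fix c x assume c: "c \<in> K" and x: "x \<in> Wr K n m L"
  have "(\<lambda>j. msc c x i j) = (\<lambda>j. c * (\<lambda>j. x i j) j)" for i by (simp add: msc_def)
  then show "msc c x \<in> Wr K n m L" using x c fsubD(4)[OF L c] subfieldD(4)[OF K(1)]
    by (auto simp: Wr_def mats_iff msc_def)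
qed

lemma card_Wc:
  assumes U: "fsub K {..<n} U"
  shows "card (Wc K n m U) = card U ^ m"
proof -
  have Uv: "U \<subseteq> vecs K n" using fsub_vecs[OF U] .
  have "bij_betw (\<lambda>M. \<lambda>j\<in>{..<m}. (\<lambda>i. M i j)) (Wc K n m U) ({..<m} \<rightarrow>\<^sub>E U)"
  proof (rule bij_betw_byWitness[where f'="\<lambda>f i j. if j < m then f j i else 0"])
    show "\<forall>M\<in>Wc K n m U. (\<lambda>i j. if j < m then (\<lambda>j\<in>{..<m}. (\<lambda>i. M i j)) j i else 0) = M"
      by (auto simp: Wc_def mats_iff fun_eq_iff)
    show "\<forall>f\<in>{..<m} \<rightarrow>\<^sub>E U. (\<lambda>j\<in>{..<m}. (\<lambda>i. (if j < m then f j i else 0))) = f"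
      by (auto simp: fun_eq_iff PiE_def extensional_def)
    show "(\<lambda>M. \<lambda>j\<in>{..<m}. (\<lambda>i. M i j)) ` Wc K n m U \<subseteq> {..<m} \<rightarrow>\<^sub>E U"
      by (auto simp: Wc_def)
    show "(\<lambda>f i j. if j < m then f j i else 0) ` ({..<m} \<rightarrow>\<^sub>E U) \<subseteq> Wc K n m U"
    proof
      fix M assume "M \<in> (\<lambda>f i j. if j < m then f j i else 0) ` ({..<m} \<rightarrow>\<^sub>E U)"
      then obtain f where M: "M = (\<lambda>i j. if j < m then f j i else 0)" and f: "f \<in> {..<m} \<rightarrow>\<^sub>E U"
        by auto
      have fv: "f j \<in> vecs K n" if "j < m" for j using f that Uv by auto
      have "M \<in> mats K n m" unfolding mats_iff M using fv by (auto simp: vecs_def)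
      moreover have "(\<lambda>i. M i j) \<in> U" if "j < m" for j using f that by (auto simp: M)
      ultimately show "M \<in> Wc K n m U" by (simp add: Wc_def)
    qed
  qed
  then show ?thesis by (simp add: bij_betw_same_card card_funcsetE)
qed

lemma card_Wr:
  assumes L: "fsub K {..<m} L"
  shows "card (Wr K n m L) = card L ^ n"
proof -
  have Lv: "L \<subseteq> vecs K m" using fsub_vecs[OF L] .
  have "bij_betw (\<lambda>M. \<lambda>i\<in>{..<n}. (\<lambda>j. M i j)) (Wr K n m L) ({..<n} \<rightarrow>\<^sub>E L)"
  proof (rule bij_betw_byWitness[where f'="\<lambda>f i j. if i < n then f i j else 0"])
    show "\<forall>M\<in>Wr K n m L. (\<lambda>i j. if i < n then (\<lambda>i\<in>{..<n}. (\<lambda>j. M i j)) i j else 0) = M"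
      by (auto simp: Wr_def mats_iff fun_eq_iff)
    show "\<forall>f\<in>{..<n} \<rightarrow>\<^sub>E L. (\<lambda>i\<in>{..<n}. (\<lambda>j. (if i < n then f i j else 0))) = f"
      by (auto simp: fun_eq_iff PiE_def extensional_def)
    show "(\<lambda>M. \<lambda>i\<in>{..<n}. (\<lambda>j. M i j)) ` Wr K n m L \<subseteq> {..<n} \<rightarrow>\<^sub>E L"
      by (auto simp: Wr_def)
    show "(\<lambda>f i j. if i < n then f i j else 0) ` ({..<n} \<rightarrow>\<^sub>E L) \<subseteq> Wr K n m L"
    proof
      fix M assume "M \<in> (\<lambda>f i j. if i < n then f i j else 0) ` ({..<n} \<rightarrow>\<^sub>E L)"
      then obtain f where M: "M = (\<lambda>i j. if i < n then f i j else 0)" and f: "f \<in> {..<n} \<rightarrow>\<^sub>E L"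
        by auto
      have fv: "f i \<in> vecs K m" if "i < n" for i using f that Lv by auto
      have "M \<in> mats K n m" unfolding mats_iff M using fv by (auto simp: vecs_def)
      moreover have "(\<lambda>j. M i j) \<in> L" if "i < n" for i using f that by (auto simp: M)
      ultimately show "M \<in> Wr K n m L" by (simp add: Wr_def)
    qed
  qed
  then show ?thesis by (simp add: bij_betw_same_card card_funcsetE)
qed

end

context
  fixes K :: "'b::field set" and n m :: nat
  assumes K: "subfield K" "finite K"
begin

lemma mp_Wc:
  assumes U: "fsub K {..<n} U"
  shows "mp K n m (Wc K n m (perp K n U)) = Wc K n m U"
proof -
  have PU: "fsub K {..<n} (perp K n U)" unfolding perp_fperp by (rule fsub_fperp[OF K(1)])
  have sub: "Wc K n m U \<subseteq> mp K n m (Wc K n m (perp K n U))"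
  proof
    fix M assume M: "M \<in> Wc K n m U"
    have "(\<Sum>i<n. \<Sum>j<m. N i j * M i j) = 0" if N: "N \<in> Wc K n m (perp K n U)" for N
    proof -
      have "(\<Sum>i<n. \<Sum>j<m. N i j * M i j) = (\<Sum>j<m. \<Sum>i<n. M i j * N i j)"
        by (subst sum.swap) (simp add: mult.commute)
      also have "\<dots> = 0"
      proof (rule sum.neutral, rule ballI)
        fix j assume j: "j \<in> {..<m}"
        have "(\<lambda>i. M i j) \<in> U" using M j by (simp add: Wc_def)
        moreover have "(\<lambda>i. N i j) \<in> perp K n U" using N j by (simp add: Wc_def)
        ultimately show "(\<Sum>i<n. M i j * N i j) = 0" unfolding perp_def dotp_def by auto
      qed
      finally show ?thesis .
    qed
    then show "M \<in> mp K n m (Wc K n m (perp K n U))" using M by (simp add: mp_sum[OF K] Wc_def)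
  qed
  have c1: "card (Wc K n m (perp K n U)) * card (mp K n m (Wc K n m (perp K n U))) = card K ^ (n * m)"
    by (rule card_mp[OF K Wc_msub[OF K PU]])
  have c2: "card (Wc K n m (perp K n U)) = card (perp K n U) ^ m" by (rule card_Wc[OF K PU])
  have c3: "card U * card (perp K n U) = card K ^ n"
    unfolding perp_fperp using perp_card[OF K _ U] by simp
  have pos: "card (perp K n U) > 0"
    using fsubD(2)[OF PU] fsub_finite[OF _ K(2) PU] by (auto simp: card_gt_0_iff)
  have "card (mp K n m (Wc K n m (perp K n U))) * card (perp K n U) ^ m = card U ^ m * card (perp K n U) ^ m"
    using c1 c2 c3 by (metis mult.commute power_mult power_mult_distrib)
  then have ceq: "card (mp K n m (Wc K n m (perp K n U))) = card (Wc K n m U)"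
    using pos card_Wc[OF K U] by simp
  have "finite (mp K n m (Wc K n m (perp K n U)))" by (rule msub_finite[OF K msub_mp[OF K]])
  then show ?thesis using sub ceq by (metis card_subset_eq)
qed

lemma mp_Wr:
  assumes L: "fsub K {..<m} L"
  shows "mp K n m (Wr K n m (perp K m L)) = Wr K n m L"
proof -
  have PL: "fsub K {..<m} (perp K m L)" unfolding perp_fperp by (rule fsub_fperp[OF K(1)])
  have sub: "Wr K n m L \<subseteq> mp K n m (Wr K n m (perp K m L))"
  proof
    fix M assume M: "M \<in> Wr K n m L"
    have "(\<Sum>i<n. \<Sum>j<m. N i j * M i j) = 0" if N: "N \<in> Wr K n m (perp K m L)" for N
    proof (rule sum.neutral, rule ballI)
      fix i assume i: "i \<in> {..<n}"
      have "(\<lambda>j. M i j) \<in> L" using M i by (simp add: Wr_def)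
      moreover have "(\<lambda>j. N i j) \<in> perp K m L" using N i by (simp add: Wr_def)
      ultimately have "(\<Sum>j<m. M i j * N i j) = 0" unfolding perp_def dotp_def by auto
      then show "(\<Sum>j<m. N i j * M i j) = 0" by (simp add: mult.commute)
    qed
    then show "M \<in> mp K n m (Wr K n m (perp K m L))" using M by (simp add: mp_sum[OF K] Wr_def)
  qed
  have c1: "card (Wr K n m (perp K m L)) * card (mp K n m (Wr K n m (perp K m L))) = card K ^ (n * m)"
    by (rule card_mp[OF K Wr_msub[OF K PL]])
  have c2: "card (Wr K n m (perp K m L)) = card (perp K m L) ^ n" by (rule card_Wr[OF K PL])
  have c3: "card L * card (perp K m L) = card K ^ m"
    unfolding perp_fperp using perp_card[OF K _ L] by simp
  have pos: "card (perp K m L) > 0"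
    using fsubD(2)[OF PL] fsub_finite[OF _ K(2) PL] by (auto simp: card_gt_0_iff)
  have "card (mp K n m (Wr K n m (perp K m L))) * card (perp K m L) ^ n = card L ^ n * card (perp K m L) ^ n"
    using c1 c2 c3 by (metis mult.commute power_mult power_mult_distrib)
  then have ceq: "card (mp K n m (Wr K n m (perp K m L))) = card (Wr K n m L)"
    using pos card_Wr[OF K L] by simp
  have "finite (mp K n m (Wr K n m (perp K m L)))" by (rule msub_finite[OF K msub_mp[OF K]])
  then show ?thesis using sub ceq by (metis card_subset_eq)
qed

lemma restr_c_eq:
  assumes D: "D \<subseteq> mats K n m" and U: "fsub K {..<n} U"
  shows "restr_c K m D U = D \<inter> Wc K n m U"
proof -
  have Us: "ksubspace K vsc U" using U fsub_iff by blast
  have "colsp K m M \<subseteq> U \<longleftrightarrow> (\<forall>j<m. (\<lambda>i. M i j) \<in> U)" for M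
    unfolding colsp_def smod.kspan_subset_iff[OF smod_vsc[OF K] Us] by blast
  then show ?thesis using D unfolding restr_c_def Wc_def by blast
qed

lemma restr_r_eq:
  assumes D: "D \<subseteq> mats K n m" and L: "fsub K {..<m} L"
  shows "restr_r K n D L = D \<inter> Wr K n m L"
proof -
  have Ls: "ksubspace K vsc L" using L fsub_iff by blast
  have "rowsp K n M \<subseteq> L \<longleftrightarrow> (\<forall>i<n. (\<lambda>j. M i j) \<in> L)" for M
    unfolding rowsp_def smod.kspan_subset_iff[OF smod_vsc[OF K] Ls] by blast
  then show ?thesis using D unfolding restr_r_def Wr_def by blast
qed

theorem main_col:
  assumes D: "msub K n m D" and U: "fsub K {..<n} U"
  shows "card (mp K n m D \<inter> Wc K n m U) * card D * card (Wc K n m (perp K n U))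
       = card K ^ (n * m) * card (D \<inter> Wc K n m (perp K n U))"
proof -
  have PU: "fsub K {..<n} (perp K n U)" unfolding perp_fperp by (rule fsub_fperp[OF K(1)])
  show ?thesis using mp_inter_card[OF K D Wc_msub[OF K PU]] mp_Wc[OF U] by simp
qed

theorem main_row:
  assumes D: "msub K n m D" and L: "fsub K {..<m} L"
  shows "card (mp K n m D \<inter> Wr K n m L) * card D * card (Wr K n m (perp K m L))
       = card K ^ (n * m) * card (D \<inter> Wr K n m (perp K m L))"
proof -
  have PL: "fsub K {..<m} (perp K m L)" unfolding perp_fperp by (rule fsub_fperp[OF K(1)])
  show ?thesis using mp_inter_card[OF K D Wr_msub[OF K PL]] mp_Wr[OF L] by simp
qed

end

context basis_ctx
begin

lemma gmat_mats: "gmat K n m h v \<in> mats K n m"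
  unfolding mats_iff gmat_def using coord_K coord_high by auto

lemma gmat_row: "i < n \<Longrightarrow> (\<lambda>j. gmat K n m h v i j) = coord K m h (v i)"
  by (simp add: gmat_def)

lemma gmat_inj: "inj_on (gmat K n m h) (vecs UNIV n)"
proof (rule inj_onI)
  fix v w assume v: "v \<in> vecs UNIV n" and w: "w \<in> vecs UNIV n" and e: "gmat K n m h v = gmat K n m h w"
  show "v = w"
  proof
    fix i show "v i = w i"
    proof (cases "i < n")
      case True
      have "coord K m h (v i) = (\<lambda>j. gmat K n m h v i j)" using True by (simp add: gmat_def)
      also have "\<dots> = (\<lambda>j. gmat K n m h w i j)" using e by simp
      also have "\<dots> = coord K m h (w i)" using True by (simp add: gmat_def)
      finally have "coord K m h (v i) = coord K m h (w i)" .
      then show ?thesis by (rule coord_inj)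
    next
      case False then show ?thesis using v w by (simp add: vecs_def)
    qed
  qed
qed

lemma gmat_add: "gmat K n m h (v + w) = gmat K n m h v + gmat K n m h w"
  by (simp add: gmat_def coord_add fun_eq_iff)

lemma gmat_vsc: "a \<in> K \<Longrightarrow> gmat K n m h (vsc a v) = msc a (gmat K n m h v)"
  by (simp add: gmat_def coord_scale vsc_def msc_def fun_eq_iff)

lemma gmat_zero: "gmat K n m h 0 = 0"
  by (simp add: gmat_def coord_zero fun_eq_iff)

lemma gimg_msub:
  assumes X: "ksubspace K vsc X"
  shows "msub K n m (gimg K n m h X)"
  unfolding msub_iff ksubspace_def gimg_def
proof (intro conjI ballI)
  show "gmat K n m h ` X \<subseteq> mats K n m" using gmat_mats by auto
  show "0 \<in> gmat K n m h ` X" using X gmat_zero unfolding ksubspace_def by (metis image_eqI)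
next
  fix x y assume "x \<in> gmat K n m h ` X" "y \<in> gmat K n m h ` X"
  then obtain v w where "x = gmat K n m h v" "y = gmat K n m h w" "v \<in> X" "w \<in> X" by auto
  then show "x + y \<in> gmat K n m h ` X" using X unfolding ksubspace_def
    by (metis gmat_add image_eqI)
next
  fix c x assume c: "c \<in> K" and "x \<in> gmat K n m h ` X"
  then obtain v where "x = gmat K n m h v" "v \<in> X" by auto
  then show "msc c x \<in> gmat K n m h ` X" using X c unfolding ksubspace_def
    by (metis gmat_vsc image_eqI)
qed

lemma card_gimg: "X \<subseteq> vecs UNIV n \<Longrightarrow> card (gimg K n m h X) = card X"
  unfolding gimg_def by (rule card_image[OF inj_on_subset[OF gmat_inj]])

lemma gimg_Wr:
  assumes "X \<subseteq> vecs UNIV n"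
  shows "gimg K n m h X \<inter> Wr K n m V = gmat K n m h ` {v \<in> X. \<forall>i<n. coord K m h (v i) \<in> V}"
  unfolding gimg_def Wr_def using gmat_mats gmat_row by auto

lemma gimg_Wc:
  "gimg K n m h X \<inter> Wc K n m U = gmat K n m h ` {v \<in> X. \<forall>j<m. (\<lambda>i. gmat K n m h v i j) \<in> U}"
  unfolding gimg_def Wc_def using gmat_mats by auto

text \<open>The column condition is basis independent.\<close>
lemma col_cond:
  assumes fK: "finite K" and U: "fsub K {..<n} U" and v: "v \<in> vecs UNIV n"
  shows "(\<forall>j<m. (\<lambda>i. gmat K n m h v i j) \<in> U) \<longleftrightarrow> (\<forall>w\<in>perp K n U. dotp n w v = 0)"
proof -
  have pp: "perp K n (perp K n U) = U"
    unfolding perp_fperp by (rule fperp_fperp[OF K fK _ U]) simp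
  have colv: "(\<lambda>i. gmat K n m h v i j) \<in> vecs K n" for j
    using coord_K subfieldD(1)[OF K] by (auto simp: vecs_def gmat_def)
  have dot: "dotp n w v = (\<Sum>j<m. (\<Sum>i<n. w i * coord K m h (v i) j) * h j)" for w
  proof -
    have "dotp n w v = (\<Sum>i<n. w i * (\<Sum>j<m. coord K m h (v i) j * h j))"
      unfolding dotp_def by (rule sum.cong[OF refl]) (metis coord_sum)
    also have "\<dots> = (\<Sum>j<m. (\<Sum>i<n. w i * coord K m h (v i) j) * h j)"
      by (simp add: sum_distrib_left sum_distrib_right mult_ac sum.swap[of _ "{..<n}"])
    finally show ?thesis .
  qed
  have coefK: "(\<Sum>i<n. w i * coord K m h (v i) j) \<in> K" if "w \<in> vecs K n" for w j
    using that by (intro subfield_sum[OF K] subfieldD(4)[OF K]) (auto simp: vecs_def coord_K)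
  have "(\<forall>j<m. (\<lambda>i. gmat K n m h v i j) \<in> U)
      \<longleftrightarrow> (\<forall>j<m. \<forall>w\<in>perp K n U. (\<Sum>i<n. w i * coord K m h (v i) j) = 0)"
  proof -
    have "(\<lambda>i. gmat K n m h v i j) \<in> U \<longleftrightarrow> (\<forall>w\<in>perp K n U. (\<Sum>i<n. w i * coord K m h (v i) j) = 0)" for j
    proof -
      have "(\<lambda>i. gmat K n m h v i j) \<in> U \<longleftrightarrow> (\<lambda>i. gmat K n m h v i j) \<in> perp K n (perp K n U)"
        using pp by simp
      also have "\<dots> \<longleftrightarrow> (\<forall>w\<in>perp K n U. dotp n w (\<lambda>i. gmat K n m h v i j) = 0)"
        using colv unfolding perp_def by blast
      also have "\<dots> \<longleftrightarrow> (\<forall>w\<in>perp K n U. (\<Sum>i<n. w i * coord K m h (v i) j) = 0)"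
        unfolding dotp_def gmat_def by simp
      finally show ?thesis .
    qed
    then show ?thesis by blast
  qed
  also have "\<dots> \<longleftrightarrow> (\<forall>w\<in>perp K n U. dotp n w v = 0)"
  proof
    assume "\<forall>j<m. \<forall>w\<in>perp K n U. (\<Sum>i<n. w i * coord K m h (v i) j) = 0"
    then show "\<forall>w\<in>perp K n U. dotp n w v = 0" unfolding dot by simp
  next
    assume a: "\<forall>w\<in>perp K n U. dotp n w v = 0"
    show "\<forall>j<m. \<forall>w\<in>perp K n U. (\<Sum>i<n. w i * coord K m h (v i) j) = 0"
    proof (intro allI impI ballI)
      fix j w assume j: "j < m" and w: "w \<in> perp K n U"
      have wv: "w \<in> vecs K n" using w by (simp add: perp_def)
      show "(\<Sum>i<n. w i * coord K m h (v i) j) = 0"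
        using indep[of "\<lambda>j. \<Sum>i<n. w i * coord K m h (v i) j", OF _ _ j] coefK[OF wv] a w
        unfolding dot by blast
    qed
  qed
  finally show ?thesis .
qed

end

locale main_ctx =
  fixes K :: "'b::field set" and n m :: nat and C :: "(nat \<Rightarrow> 'b) set" and g gs :: "nat \<Rightarrow> 'b"
  assumes fin: "finite (UNIV :: 'b set)"
    and K: "subfield K"
    and n2: "2 \<le> n" and nm: "n \<le> m"
    and C: "rm_code n C"
    and bg: "is_basis K m g"
    and dual: "is_dual_basis K m g gs"
begin

lemma fK: "finite K" using fin by (rule finite_subset[rotated]) simp
lemma KK: "subfield K" "finite K" using K fK by auto

sublocale g: basis_ctx K m g using K bg by unfold_locales
sublocale gs: basis_ctx K m gs by unfold_locales (use K dual in \<open>auto simp: is_dual_basis_def\<close>)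

lemma subfield_UNIV: "subfield (UNIV :: 'b set)" by (simp add: subfield_def)

lemma C_vecs: "C \<subseteq> vecs UNIV n" using C by (simp add: rm_code_def)
lemma C_fsubU: "fsub UNIV {..<n} C" using C by (simp add: rm_code_def fsub_iff)
lemma C_ksub: "ksubspace K vsc C" using C by (simp add: rm_code_def ksubspace_def)

abbreviation "C' \<equiv> perp UNIV n C"

lemma C'_fsubU: "fsub UNIV {..<n} C'" unfolding perp_fperp by (rule fsub_fperp[OF subfield_UNIV])
lemma C'_vecs: "C' \<subseteq> vecs UNIV n" using C'_fsubU fsub_iff by blast
lemma C'_ksub: "ksubspace K vsc C'" using C'_fsubU unfolding fsub_iff ksubspace_def by blast

lemma card_CC': "card C * card C' = card K ^ (n * m)"
proof -
  have "card C * card C' = card (UNIV :: 'b set) ^ n"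
    unfolding perp_fperp using perp_card[OF subfield_UNIV fin _ C_fsubU] by simp
  then show ?thesis using g.card_UNIV by (simp add: power_mult mult.commute)
qed

lemma C_finite: "finite C" using fsub_finite[OF _ fin C_fsubU] by simp

lemma trace_pair: "trace K m (x * y) = (\<Sum>j<m. coord K m gs x j * coord K m g y j)"
proof -
  let ?b = "coord K m gs x" and ?a = "coord K m g y"
  have "x * y = (\<Sum>k<m. ?b k * gs k) * (\<Sum>j<m. ?a j * g j)"
    using gs.coord_sum[of x] g.coord_sum[of y] by simp
  also have "\<dots> = (\<Sum>k<m. \<Sum>j<m. (?b k * ?a j) * (g j * gs k))"
    unfolding sum_product by (simp add: mult_ac)
  finally have xy: "x * y = \<dots>" .
  have tr: "trace K m (g j * gs k) = (if j = k then 1 else 0)" if "j < m" "k < m" for j k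
    using dual that unfolding is_dual_basis_def by blast
  have "trace K m (x * y) = (\<Sum>k<m. \<Sum>j<m. (?b k * ?a j) * trace K m (g j * gs k))"
    unfolding xy trace_sum[OF fin K]
    by (intro sum.cong refl trace_scale[OF fin K] subfieldD(4)[OF K] g.coord_K gs.coord_K)
  also have "\<dots> = (\<Sum>k<m. ?b k * ?a k)"
  proof (rule sum.cong[OF refl])
    fix k assume k: "k \<in> {..<m}"
    have "(\<Sum>j<m. (?b k * ?a j) * trace K m (g j * gs k)) = (\<Sum>j<m. if j = k then ?b k * ?a j else 0)"
      using tr k by (intro sum.cong refl) auto
    also have "\<dots> = ?b k * ?a k" using k by (simp add: sum.delta)
    finally show "(\<Sum>j<m. (?b k * ?a j) * trace K m (g j * gs k)) = ?b k * ?a k" .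
  qed
  finally show ?thesis .
qed

lemma trace_duality: "gimg K n m g C' = mp K n m (gimg K n m gs C)"
proof -
  have sub: "gimg K n m g C' \<subseteq> mp K n m (gimg K n m gs C)"
  proof
    fix N assume "N \<in> gimg K n m g C'"
    then obtain v where N: "N = gmat K n m g v" and v: "v \<in> C'" by (auto simp: gimg_def)
    have "(\<Sum>i<n. \<Sum>j<m. M i j * N i j) = 0" if "M \<in> gimg K n m gs C" for M
    proof -
      from that obtain w where M: "M = gmat K n m gs w" and w: "w \<in> C" by (auto simp: gimg_def)
      have "(\<Sum>i<n. \<Sum>j<m. M i j * N i j) = (\<Sum>i<n. trace K m (w i * v i))"
        unfolding M N trace_pair by (simp add: gmat_def)
      also have "\<dots> = trace K m (dotp n w v)" unfolding dotp_def by (simp add: trace_sum[OF fin K])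
      also have "dotp n w v = 0" using v w unfolding perp_def by auto
      also have "trace K m 0 = 0" using fK subfieldD(1)[OF K] by (intro trace_zero) (auto simp: card_gt_0_iff)
      finally show ?thesis .
    qed
    then show "N \<in> mp K n m (gimg K n m gs C)" unfolding mp_sum[OF KK] N using g.gmat_mats by auto
  qed
  have c1: "card (gimg K n m g C') = card C'" by (rule g.card_gimg[OF C'_vecs])
  have c2: "card (gimg K n m gs C) * card (mp K n m (gimg K n m gs C)) = card K ^ (n * m)"
    by (rule card_mp[OF KK gs.gimg_msub[OF C_ksub]])
  have c3: "card (gimg K n m gs C) = card C" by (rule gs.card_gimg[OF C_vecs])
  have "card C > 0" using C_finite fsubD(2)[OF C_fsubU] by (auto simp: card_gt_0_iff)
  then have "card (mp K n m (gimg K n m gs C)) = card (gimg K n m g C')"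
    using c1 c2 c3 card_CC' by (metis nat_mult_eq_cancel1)
  moreover have "finite (mp K n m (gimg K n m gs C))" by (rule msub_finite[OF KK msub_mp[OF KK]])
  ultimately show ?thesis using sub by (metis card_subset_eq)
qed

end

lemma fsub_zero:
  fixes K :: "'b::field set" and I :: "'i set"
  shows "subfield K \<Longrightarrow> fsub K I {0}"
proof -
  assume K: "subfield K"
  have "(\<lambda>i. c * (0 :: 'i \<Rightarrow> 'b) i) = 0" for c :: 'b by (simp add: fun_eq_iff)
  then show ?thesis unfolding fsub_def using fv_zero[OF K, of I] by auto
qed

lemma perp_vecs:
  assumes K: "subfield K" "finite K"
  shows "perp K N (vecs K N) = {0}"
proof -
  have "perp K N {0} = vecs K N" unfolding perp_def dotp_def by auto
  then have "perp K N (vecs K N) = perp K N (perp K N {0})" by simp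
  also have "\<dots> = {0}" unfolding perp_fperp by (rule fperp_fperp[OF K _ fsub_zero[OF K(1)]]) simp
  finally show ?thesis .
qed

lemma perp_perp:
  assumes K: "subfield K" "finite K" and A: "fsub K {..<N} A"
  shows "perp K N (perp K N A) = A"
  unfolding perp_fperp by (rule fperp_fperp[OF K _ A]) simp

lemma fsub_perp: "subfield K \<Longrightarrow> fsub K {..<N} (perp K N J)"
  unfolding perp_fperp by (rule fsub_fperp)

lemma card_kdim_v:
  assumes K: "subfield K" "finite K" and A: "fsub K {..<N} A"
  shows "card A = card K ^ kdim K vsc A"
  using smod.card_kdim[OF smod_vsc[OF K]] A fsub_iff fsub_finite[OF _ K(2) A] by blast

lemma pow_inj: "2 \<le> (q::nat) \<Longrightarrow> q ^ a = q ^ b \<Longrightarrow> a = b"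
  by simp

lemma card_ge2: "subfield K \<Longrightarrow> finite K \<Longrightarrow> 2 \<le> card K"
  using smod.card_S_ge2[OF smod_vsc] by blast

context main_ctx
begin

abbreviation "D \<equiv> gimg K n m gs C"
abbreviation "Dg \<equiv> gimg K n m g C"
abbreviation "E \<equiv> gimg K n m g C'"

lemma D_msub: "msub K n m D" by (rule gs.gimg_msub[OF C_ksub])
lemma Dg_msub: "msub K n m Dg" by (rule g.gimg_msub[OF C_ksub])
lemma E_eq: "E = mp K n m D" by (rule trace_duality)
lemma E_msub: "msub K n m E" unfolding E_eq by (rule msub_mp[OF KK])
lemma q2: "2 \<le> card K" by (rule card_ge2[OF KK])

lemma ED: "kdim K msc E + kdim K msc D = n * m"
proof -
  have "card K ^ (kdim K msc D + kdim K msc E) = card K ^ (n * m)"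
    using card_mp[OF KK D_msub] card_kdim_m[OF KK D_msub] card_kdim_m[OF KK E_msub] E_eq
    by (simp add: power_add)
  then show ?thesis using pow_inj[OF q2] by (simp add: add.commute)
qed

lemma D_zero_c: "kdim K msc (restr_c K m D (perp K n (vecs K n))) = 0"
proof -
  have "restr_c K m D (perp K n (vecs K n)) = D \<inter> Wc K n m {0}"
    unfolding perp_vecs[OF KK] using D_msub by (intro restr_c_eq[OF KK]) (auto simp: msub_iff fsub_zero[OF K])
  also have "\<dots> = {0}"
  proof
    show "D \<inter> Wc K n m {0} \<subseteq> {0}"
    proof
      fix M assume M: "M \<in> D \<inter> Wc K n m {0}"
      have "M i j = 0" for i j
      proof (cases "j < m")
        case True
        then have "(\<lambda>i. M i j) = 0" using M by (simp add: Wc_def)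
        then have "(\<lambda>i. M i j) i = (0 :: nat \<Rightarrow> 'b) i" by (rule fun_cong)
        then show ?thesis by simp
      next
        case False then show ?thesis using M by (simp add: Wc_def mats_iff)
      qed
      then show "M \<in> {0}" by (simp add: fun_eq_iff)
    qed
    have "0 \<in> D" using D_msub by (simp add: msub_iff ksubspace_def)
    moreover have "0 \<in> Wc K n m {0}" using K by (simp add: Wc_def mats_iff subfieldD(1) zero_fun_def)
    ultimately show "{0} \<subseteq> D \<inter> Wc K n m {0}" by simp
  qed
  finally have eq: "restr_c K m D (perp K n (vecs K n)) = {0}" .
  show ?thesis unfolding eq by (rule kdim_m_eqI[OF KK]) (auto simp: msub_def fsub_zero[OF K] flat_zero)
qed

lemma D_zero_r: "kdim K msc (restr_r K n D (perp K m (vecs K m))) = 0"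
proof -
  have "restr_r K n D (perp K m (vecs K m)) = D \<inter> Wr K n m {0}"
    unfolding perp_vecs[OF KK] using D_msub by (intro restr_r_eq[OF KK]) (auto simp: msub_iff fsub_zero[OF K])
  also have "\<dots> = {0}"
  proof
    show "D \<inter> Wr K n m {0} \<subseteq> {0}"
    proof
      fix M assume M: "M \<in> D \<inter> Wr K n m {0}"
      have "M i j = 0" for i j
      proof (cases "i < n")
        case True
        then show ?thesis using M by (simp add: Wr_def)
      next
        case False then show ?thesis using M by (simp add: Wr_def mats_iff)
      qed
      then show "M \<in> {0}" by (simp add: fun_eq_iff)
    qed
    have "0 \<in> D" using D_msub by (simp add: msub_iff ksubspace_def)
    moreover have "0 \<in> Wr K n m {0}" using K by (simp add: Wr_def mats_iff subfieldD(1) zero_fun_def)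
    ultimately show "{0} \<subseteq> D \<inter> Wr K n m {0}" by simp
  qed
  finally have eq: "restr_r K n D (perp K m (vecs K m)) = {0}" .
  show ?thesis unfolding eq by (rule kdim_m_eqI[OF KK]) (auto simp: msub_def fsub_zero[OF K] flat_zero)
qed

theorem claim1:
  assumes A: "A \<subseteq> vecs K n" "ksubspace K vsc A"
  shows "rho_c K n m E A = pdual K n (rho_c K n m D) A"
proof -
  have fA: "fsub K {..<n} A" using A fsub_iff by blast
  have PA: "fsub K {..<n} (perp K n A)" by (rule fsub_perp[OF K])
  have PPA: "fsub K {..<n} (perp K n (perp K n A))" by (rule fsub_perp[OF K])
  have pp: "perp K n (perp K n A) = A" by (rule perp_perp[OF KK fA])
  have Emats: "E \<subseteq> mats K n m" and Dmats: "D \<subseteq> mats K n m"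
    using E_msub D_msub by (auto simp: msub_iff)
  have r1: "restr_c K m E (perp K n A) = E \<inter> Wc K n m (perp K n A)" by (rule restr_c_eq[OF KK Emats PA])
  have r2: "restr_c K m D (perp K n (perp K n A)) = D \<inter> Wc K n m (perp K n (perp K n A))"
    by (rule restr_c_eq[OF KK Dmats PPA])
  define e where "e = kdim K msc E"
  define d where "d = kdim K msc D"
  define x where "x = kdim K msc (E \<inter> Wc K n m (perp K n A))"
  define y where "y = kdim K msc (D \<inter> Wc K n m (perp K n (perp K n A)))"
  define a where "a = kdim K vsc A"
  have main: "card (mp K n m D \<inter> Wc K n m (perp K n A)) * card D * card (Wc K n m (perp K n (perp K n A)))
       = card K ^ (n * m) * card (D \<inter> Wc K n m (perp K n (perp K n A)))"
    by (rule main_col[OF KK D_msub PA])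
  have cx: "card (E \<inter> Wc K n m (perp K n A)) = card K ^ x" unfolding x_def
    by (rule card_kdim_m[OF KK msub_Int[OF KK E_msub Wc_msub[OF KK PA]]])
  have cy: "card (D \<inter> Wc K n m (perp K n (perp K n A))) = card K ^ y" unfolding y_def
    by (rule card_kdim_m[OF KK msub_Int[OF KK D_msub Wc_msub[OF KK PPA]]])
  have cd: "card D = card K ^ d" unfolding d_def by (rule card_kdim_m[OF KK D_msub])
  have "card (Wc K n m (perp K n (perp K n A))) = card (perp K n (perp K n A)) ^ m"
    by (rule card_Wc[OF KK PPA])
  also have "\<dots> = card A ^ m" by (simp only: pp)
  also have "\<dots> = card K ^ (a * m)" by (simp add: card_kdim_v[OF KK fA] a_def power_mult)
  finally have cW: "card (Wc K n m (perp K n (perp K n A))) = card K ^ (a * m)" .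
  have "card K ^ (x + d + a * m) = card K ^ (n * m + y)"
    using main cx cy cd cW E_eq by (simp add: power_add)
  then have eq1: "x + d + a * m = n * m + y" by (rule pow_inj[OF q2])
  have eq2: "e + d = n * m" using ED unfolding e_def d_def .
  have mpos: "real m > 0" using n2 nm by simp
  have "rho_c K n m E A = (real e - real x) / real m"
    unfolding rho_c_def r1 e_def x_def ..
  also have "\<dots> = real a - (real d - 0) / real m + (real d - real y) / real m"
  proof -
    have "real x + real d + real a * real m = real n * real m + real y"
      using eq1 by (metis of_nat_add of_nat_mult)
    moreover have "real e + real d = real n * real m" using eq2 by (metis of_nat_add of_nat_mult)
    ultimately have h: "real e - real x = real a * real m - real y" by linarith
    show ?thesis unfolding h using mpos by (simp add: field_simps)
  qed
  also have "\<dots> = pdual K n (rho_c K n m D) A"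
    unfolding pdual_def rho_c_def D_zero_c r2 a_def d_def y_def by simp
  finally show ?thesis .
qed

theorem claim3:
  assumes A: "A \<subseteq> vecs K m" "ksubspace K vsc A"
  shows "rho_r K n m E A = pdual K m (rho_r K n m D) A"
proof -
  have fA: "fsub K {..<m} A" using A fsub_iff by blast
  have PA: "fsub K {..<m} (perp K m A)" by (rule fsub_perp[OF K])
  have PPA: "fsub K {..<m} (perp K m (perp K m A))" by (rule fsub_perp[OF K])
  have pp: "perp K m (perp K m A) = A" by (rule perp_perp[OF KK fA])
  have Emats: "E \<subseteq> mats K n m" and Dmats: "D \<subseteq> mats K n m"
    using E_msub D_msub by (auto simp: msub_iff)
  have r1: "restr_r K n E (perp K m A) = E \<inter> Wr K n m (perp K m A)" by (rule restr_r_eq[OF KK Emats PA])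
  have r2: "restr_r K n D (perp K m (perp K m A)) = D \<inter> Wr K n m (perp K m (perp K m A))"
    by (rule restr_r_eq[OF KK Dmats PPA])
  define e where "e = kdim K msc E"
  define d where "d = kdim K msc D"
  define x where "x = kdim K msc (E \<inter> Wr K n m (perp K m A))"
  define y where "y = kdim K msc (D \<inter> Wr K n m (perp K m (perp K m A)))"
  define a where "a = kdim K vsc A"
  have main: "card (mp K n m D \<inter> Wr K n m (perp K m A)) * card D * card (Wr K n m (perp K m (perp K m A)))
       = card K ^ (n * m) * card (D \<inter> Wr K n m (perp K m (perp K m A)))"
    by (rule main_row[OF KK D_msub PA])
  have cx: "card (E \<inter> Wr K n m (perp K m A)) = card K ^ x" unfolding x_def
    by (rule card_kdim_m[OF KK msub_Int[OF KK E_msub Wr_msub[OF KK PA]]])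
  have cy: "card (D \<inter> Wr K n m (perp K m (perp K m A))) = card K ^ y" unfolding y_def
    by (rule card_kdim_m[OF KK msub_Int[OF KK D_msub Wr_msub[OF KK PPA]]])
  have cd: "card D = card K ^ d" unfolding d_def by (rule card_kdim_m[OF KK D_msub])
  have "card (Wr K n m (perp K m (perp K m A))) = card (perp K m (perp K m A)) ^ n"
    by (rule card_Wr[OF KK PPA])
  also have "\<dots> = card A ^ n" by (simp only: pp)
  also have "\<dots> = card K ^ (a * n)" by (simp add: card_kdim_v[OF KK fA] a_def power_mult)
  finally have cW: "card (Wr K n m (perp K m (perp K m A))) = card K ^ (a * n)" .
  have "card K ^ (x + d + a * n) = card K ^ (n * m + y)"
    using main cx cy cd cW E_eq by (simp add: power_add)
  then have eq1: "x + d + a * n = n * m + y" by (rule pow_inj[OF q2])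
  have eq2: "e + d = n * m" using ED unfolding e_def d_def .
  have npos: "real n > 0" using n2 by simp
  have "rho_r K n m E A = (real e - real x) / real n"
    unfolding rho_r_def r1 e_def x_def ..
  also have "\<dots> = real a - (real d - 0) / real n + (real d - real y) / real n"
  proof -
    have "real x + real d + real a * real n = real n * real m + real y"
      using eq1 by (metis of_nat_add of_nat_mult)
    moreover have "real e + real d = real n * real m" using eq2 by (metis of_nat_add of_nat_mult)
    ultimately have h: "real e - real x = real a * real n - real y" by linarith
    show ?thesis unfolding h using npos by (simp add: field_simps)
  qed
  also have "\<dots> = pdual K m (rho_r K n m D) A"
    unfolding pdual_def rho_r_def D_zero_r r2 a_def d_def y_def by simp
  finally show ?thesis .
qed

end

definition Tmap :: "'b::field set \<Rightarrow> nat \<Rightarrow> (nat \<Rightarrow> 'b) \<Rightarrow> (nat \<Rightarrow> 'b) \<Rightarrow> (nat \<Rightarrow> 'b) \<Rightarrow> (nat \<Rightarrow> 'b)" where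
  "Tmap K m g gs c = coord K m g (\<Sum>k<m. c k * gs k)"

context main_ctx
begin

lemma kdim_eq_card:
  "msub K n m X \<Longrightarrow> msub K n m Y \<Longrightarrow> card X = card Y \<Longrightarrow> kdim K msc X = kdim K msc Y"
  using card_kdim_m[OF KK, where D = X] card_kdim_m[OF KK, where D = Y] pow_inj[OF q2] by metis

lemma cg: "card (gmat K n m g ` {v \<in> C. P v}) = card {v \<in> C. P v}"
  by (rule card_image[OF inj_on_subset[OF g.gmat_inj]]) (use C_vecs in auto)

lemma cgs: "card (gmat K n m gs ` {v \<in> C. P v}) = card {v \<in> C. P v}"
  by (rule card_image[OF inj_on_subset[OF gs.gmat_inj]]) (use C_vecs in auto)

lemma kdim_D_Dg: "kdim K msc D = kdim K msc Dg"
  by (rule kdim_eq_card[OF D_msub Dg_msub]) (simp add: gs.card_gimg[OF C_vecs] g.card_gimg[OF C_vecs])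

lemma rho_c_basis: "rho_c K n m D J = rho_c K n m Dg J"
proof -
  let ?U = "perp K n J"
  have U: "fsub K {..<n} ?U" by (rule fsub_perp[OF K])
  have Dm: "D \<subseteq> mats K n m" and Dgm: "Dg \<subseteq> mats K n m" using D_msub Dg_msub by (auto simp: msub_iff)
  have S: "{v \<in> C. \<forall>j<m. (\<lambda>i. gmat K n m gs v i j) \<in> ?U} = {v \<in> C. \<forall>j<m. (\<lambda>i. gmat K n m g v i j) \<in> ?U}"
    using gs.col_cond[OF fK U] g.col_cond[OF fK U] C_vecs by blast
  have "card (restr_c K m D ?U) = card (restr_c K m Dg ?U)"
    unfolding restr_c_eq[OF KK Dm U] restr_c_eq[OF KK Dgm U] gs.gimg_Wc g.gimg_Wc cg cgs S ..
  then have "kdim K msc (restr_c K m D ?U) = kdim K msc (restr_c K m Dg ?U)"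
    unfolding restr_c_eq[OF KK Dm U] restr_c_eq[OF KK Dgm U]
    by (intro kdim_eq_card msub_Int[OF KK] D_msub Dg_msub Wc_msub[OF KK U])
  then show ?thesis unfolding rho_c_def kdim_D_Dg by simp
qed

theorem claim2: "pdual K n (rho_c K n m D) A = pdual K n (rho_c K n m Dg) A"
  unfolding pdual_def rho_c_basis ..

abbreviation "T \<equiv> Tmap K m g gs"
abbreviation "S \<equiv> Tmap K m gs g"

lemma T_vecs: "T c \<in> vecs K m" unfolding Tmap_def by (rule g.coord_vecs)

lemma T_coord: "T (coord K m gs x) = coord K m g x"
  unfolding Tmap_def using gs.coord_sum[of x] by simp

lemma TS: "c \<in> vecs K m \<Longrightarrow> T (S c) = c"
  unfolding Tmap_def[of K m g gs] Tmap_def[of K m gs g]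
  by (simp add: gs.coord_sum[symmetric] g.coord_of)

lemma ST: "c \<in> vecs K m \<Longrightarrow> S (T c) = c"
  unfolding Tmap_def[of K m g gs] Tmap_def[of K m gs g]
  by (simp add: g.coord_sum[symmetric] gs.coord_of)

lemma S_vecs: "S c \<in> vecs K m" unfolding Tmap_def by (rule gs.coord_vecs)

lemma T_bij: "bij_betw T (vecs K m) (vecs K m)"
  by (rule bij_betw_byWitness[where f'=S]) (use TS ST T_vecs S_vecs in auto)

lemma T_inj: "inj_on T (vecs K m)" using T_bij by (simp add: bij_betw_def)

lemma T_add: "T (u + v) = T u + T v"
proof -
  have "(\<Sum>k<m. (u + v) k * gs k) = (\<Sum>k<m. u k * gs k) + (\<Sum>k<m. v k * gs k)"
    by (simp add: distrib_right sum.distrib)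
  then show ?thesis unfolding Tmap_def by (simp add: g.coord_add plus_fun_def)
qed

lemma T_vsc: "c \<in> K \<Longrightarrow> T (vsc c u) = vsc c (T u)"
proof -
  assume c: "c \<in> K"
  have "(\<Sum>k<m. vsc c u k * gs k) = c * (\<Sum>k<m. u k * gs k)"
    by (simp add: vsc_def sum_distrib_left mult.assoc)
  then show ?thesis unfolding Tmap_def by (simp add: g.coord_scale[OF c] vsc_def)
qed

lemma T_zero: "T 0 = 0"
  unfolding Tmap_def by (simp add: g.coord_zero zero_fun_def)

lemma fsub_T:
  assumes A: "fsub K {..<m} A"
  shows "fsub K {..<m} (T ` A)"
  unfolding fsub_def
proof (intro conjI ballI)
  show "T ` A \<subseteq> fv K {..<m}" using T_vecs vecs_fv by blast
  show "0 \<in> T ` A" using fsubD(2)[OF A] T_zero by (metis image_eqI)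
next
  fix x y assume "x \<in> T ` A" "y \<in> T ` A"
  then obtain u v where "x = T u" "y = T v" "u \<in> A" "v \<in> A" by auto
  then show "x + y \<in> T ` A" using fsubD(3)[OF A] T_add by (metis image_eqI)
next
  fix c x assume c: "c \<in> K" and "x \<in> T ` A"
  then obtain u where u: "x = T u" "u \<in> A" by auto
  have "(\<lambda>i. c * x i) = T (vsc c u)" unfolding u(1) T_vsc[OF c] by (simp add: vsc_def)
  moreover have "vsc c u \<in> A" using fsubD(4)[OF A c u(2)] by (simp add: vsc_def)
  ultimately show "(\<lambda>i. c * x i) \<in> T ` A" by simp
qed

lemma restr_r_T:
  assumes V: "fsub K {..<m} V"
  shows "card (Dg \<inter> Wr K n m (T ` V)) = card (D \<inter> Wr K n m V)"
proof -
  have Vv: "V \<subseteq> vecs K m" using fsub_vecs[OF KK V] .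
  have "{v \<in> C. \<forall>i<n. coord K m g (v i) \<in> T ` V} = {v \<in> C. \<forall>i<n. coord K m gs (v i) \<in> V}"
  proof -
    have "coord K m g x \<in> T ` V \<longleftrightarrow> coord K m gs x \<in> V" for x
      unfolding T_coord[symmetric] using inj_on_image_mem_iff[OF T_inj gs.coord_vecs Vv] .
    then show ?thesis by simp
  qed
  then show ?thesis unfolding g.gimg_Wr[OF C_vecs] gs.gimg_Wr[OF C_vecs] cg cgs by simp
qed

theorem claim4:
  assumes A: "A \<subseteq> vecs K m" "ksubspace K vsc A"
  shows "pdual K m (rho_r K n m D) A = pdual K m (rho_r K n m Dg) (T ` A)"
proof -
  have fA: "fsub K {..<m} A" using A fsub_iff by blast
  have fTA: "fsub K {..<m} (T ` A)" by (rule fsub_T[OF fA])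
  have Dm: "D \<subseteq> mats K n m" and Dgm: "Dg \<subseteq> mats K n m" using D_msub Dg_msub by (auto simp: msub_iff)
  have kA: "kdim K vsc (T ` A) = kdim K vsc A"
  proof -
    have "card (T ` A) = card A" using card_image[OF inj_on_subset[OF T_inj]] fsub_vecs[OF KK fA] by blast
    then show ?thesis using card_kdim_v[OF KK fA] card_kdim_v[OF KK fTA] pow_inj[OF q2] by metis
  qed
  have z: "fsub K {..<m} {0}" by (rule fsub_zero[OF K])
  have T0: "T ` {0} = {0}" using T_zero by simp
  have k0: "kdim K msc (restr_r K n D (perp K m (vecs K m))) = kdim K msc (restr_r K n Dg (perp K m (vecs K m)))"
    unfolding perp_vecs[OF KK] restr_r_eq[OF KK Dm z] restr_r_eq[OF KK Dgm z]
    by (rule kdim_eq_card) (use restr_r_T[OF z] T0 msub_Int[OF KK] D_msub Dg_msub Wr_msub[OF KK z] in auto)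
  have kP: "kdim K msc (restr_r K n D (perp K m (perp K m A))) = kdim K msc (restr_r K n Dg (perp K m (perp K m (T ` A))))"
    unfolding perp_perp[OF KK fA] perp_perp[OF KK fTA] restr_r_eq[OF KK Dm fA] restr_r_eq[OF KK Dgm fTA]
    by (rule kdim_eq_card) (use restr_r_T[OF fA] msub_Int[OF KK] D_msub Dg_msub Wr_msub[OF KK fA] Wr_msub[OF KK fTA] in auto)
  show ?thesis unfolding pdual_def rho_r_def kA k0 kP kdim_D_Dg ..
qed

theorem claim4': "qpm_equiv K m (pdual K m (rho_r K n m D)) (pdual K m (rho_r K n m Dg))"
  unfolding qpm_equiv_def
proof (intro exI[of _ T] conjI ballI allI impI)
  show "bij_betw T (vecs K m) (vecs K m)" by (rule T_bij)
  show "T (u + v) = T u + T v" for u v by (rule T_add)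
  show "T (vsc c u) = vsc c (T u)" if "c \<in> K" for c u by (rule T_vsc[OF that])
  show "pdual K m (rho_r K n m D) A = pdual K m (rho_r K n m Dg) (T ` A)"
    if "A \<subseteq> vecs K m \<and> ksubspace K vsc A" for A using claim4 that by blast
qed

end

theorem corollary7p2:
  fixes K :: "'b::field set" and n m :: nat and C :: "(nat \<Rightarrow> 'b) set"
    and g gs :: "nat \<Rightarrow> 'b"
  assumes "finite (UNIV :: 'b set)"
    and "subfield K"
    and "2 \<le> n" and "n \<le> m"
    and "rm_code n C"
    and "is_basis K m g"
    and "is_dual_basis K m g gs"
  shows "qpm_eq K n (rho_c K n m (gimg K n m g (perp UNIV n C)))
                    (pdual K n (rho_c K n m (gimg K n m gs C)))
       \<and> qpm_eq K n (pdual K n (rho_c K n m (gimg K n m gs C)))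
                    (pdual K n (rho_c K n m (gimg K n m g C)))
       \<and> qpm_eq K m (rho_r K n m (gimg K n m g (perp UNIV n C)))
                    (pdual K m (rho_r K n m (gimg K n m gs C)))
       \<and> qpm_equiv K m (pdual K m (rho_r K n m (gimg K n m gs C)))
                    (pdual K m (rho_r K n m (gimg K n m g C)))"
proof -
  interpret main_ctx K n m C g gs using assms by unfold_locales
  show ?thesis unfolding qpm_eq_def using claim1 claim2 claim3 claim4' by blast
qed

end
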